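(* For integers $0\le l<m\le N$, \[ \langle z^{N-m}\rangle\sum_{\substack{\lambda\in\mathbf D_N\\ P\in\mathbf L_{N,l}(\lambda)}} t^{|\delta/\lambda|}\prod_{\substack{1<i\le N\\ c_i(\lambda)=c_{i-1}(\lambda)+1}}\bigl(1+z\,t^{-c_i(\lambda)}\bigr)\,q^{\mathrm{dinv}(P)}x^{\mathrm{wt}_+(P)} =\sum_{\substack{J\subseteq[m-1]\\|J|=l}}\ \sum_{\substack{\mathbf a\in\mathbb N^{m-1},\ \tau\in\mathbb N^m\\ |\tau|=N-m}} t^{|\mathbf a|}\,q^{d((0,\mathbf a),\tau)+h_J(\mathbf a)}\,N_{((0,\mathbf a)+(1^m)+\tau)/((\mathbf a,0)+\varepsilon_J)}(X;q). \]
   Context: $\mathbb N=\{0,1,\dots\}$, $[a,b]=\{a,\dots,b\}$, $[b]=[1,b]$, $\varepsilon_J=\sum_{j\in J}\varepsilon_j$ (standard unit vectors), $|\mathbf a|=\sum a_i$, $(1^m)=(1,\dots,1)$. Dyck paths $\mathbf D_N$: south/east lattice paths from $(0,N)$ to $(N,0)$ weakly below the segment joining them; $\delta$ is the staircase path; $|\delta/\lambda|$ is the number of lattice squares above $\lambda$ and below $\delta$. $r_i(\lambda)$ is the number of such squares in the $i$-th row (rows numbered north to south); $c_i(\lambda)$ is the number of such squares in the $i$-th column (columns numbered right to left). A labelling $P\in\mathbb N^N$ attaches $P_i$ to the $i$-th south step from the north, strictly increasing from north to south along each vertical run; $\mathbf L_{N,l}(\lambda)$ ($0\le l<N$) is the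 set of labellings with exactly $l$ zeros, none on a south step on the line $x=0$. $\mathrm{dinv}(P)$ counts pairs $i<j$ with $r_i=r_j$ and $P_i<P_j$, or $r_i=r_j+1$ and $P_i>P_j$; $x^{\mathrm{wt}_+(P)}=\prod_{i:P_i\neq0}x_{P_i}$. For $\eta,\tau\in\mathbb N^m$: $d(\eta,\tau)=\sum_{1\le j<r\le m}\bigl|[\eta_j,\eta_j+\tau_j]\cap[\eta_r,\eta_r+\tau_r-1]\bigr|$. For a vector $\eta$ of length $n$ and $I\subseteq[n]$: $h_I(\eta)=|\{(r,s):1\le r<s\le n,\ r\in I,\ s\notin I,\ \eta_s=\eta_r+1\}|$. Row shapes: for $\alpha,\beta\in\mathbb Z^n$ with $\alpha_j\le\beta_j$, $\beta/\alpha$ is the tuple of single rows where row $j$ consists of boxes with $x$-coordinates $\alpha_j+1,\dots,\beta_j$; the boxes with $x$-coordinates $\alpha_j$ and $\beta_j+1$ are called adjacent to the left and right ends of row $j$ (also when the row is empty). A $w_0$-triple is $(u,v,w)$ with $v$ a box in row $r$, $u,w$ each a box of, or adjacent to, a row $j>r$, and $x$-coordinates $i_u=i_v$, $i_w=i_v+1$. A row strict tableau $S:\beta/\alpha\to\mathbb Z_+$ is strictly increasing along each row; a $w_0$-triple is increasing in $S$ if $S(u)<S(v)<S(w)$, with the convention $S(u)=-\infty$ if $u$ is adjacent to the left end of a row and $S(w)=+\infty$ if $w$ is adjacent to the right end of a row; $h_{w_0}(S)$ is the number of increasing $w_0$-triples. Define $N_{\beta/\alpha}(X;q)=\sum_S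 q^{h_{w_0}(S)}\prod_{u\in\beta/\alpha}x_{S(u)}$ over row strict tableaux $S:\beta/\alpha\to\mathbb Z_+$, and $N_{\beta/\alpha}=0$ if $\alpha_j>\beta_j$ for some $j$. *)

theory Defs
  imports "HOL-Computational_Algebra.Polynomial"
begin

text \<open>A Dyck path lambda in D_N is encoded by the function e, where e i is the
x-coordinate of the i-th south step counted from the north (1 <= i <= N);
e is zero outside [1,N].  The path from (0,N) to (N,0) stays weakly below the
segment x + y = N iff e i <= i - 1 for all i, and south/east paths correspond to
weakly increasing e.\<close>

definition dyck :: "nat \<Rightarrow> (nat \<Rightarrow> nat) set" where
  "dyck N = {e. (\<forall>i\<in>{1..N}. e i \<le> i - 1) \<and> (\<forall>i\<in>{1..<N}. e i \<le> e (Suc i))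
              \<and> (\<forall>i. i \<notin> {1..N} \<longrightarrow> e i = 0)}"

text \<open>r_i(lambda): squares in row i above lambda and below the staircase delta.\<close>
definition rowarea :: "(nat \<Rightarrow> nat) \<Rightarrow> nat \<Rightarrow> nat" where
  "rowarea e i = (i - 1) - e i"

definition area :: "nat \<Rightarrow> (nat \<Rightarrow> nat) \<Rightarrow> nat" where
  "area N e = (\<Sum>i=1..N. rowarea e i)"

text \<open>c_i(lambda): squares in the i-th column counted from the right, i.e. the column
between x = N - i and x = N - i + 1.  The unit square of row j in that column lies
above lambda and below delta iff e j <= N - i and N - i + 1 <= j - 1.\<close>
definition colarea :: "nat \<Rightarrow> (nat \<Rightarrow> nat) \<Rightarrow> nat \<Rightarrow> nat" where
  "colarea N e i = card {j \<in> {1..N}. N + 2 \<le> j + i \<and> e j + i \<le> N}"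

text \<open>L_{N,l}(lambda): labellings (P i attached to the i-th south step, zero outside
[1,N]) strictly increasing along vertical runs, with exactly l zeros, none on a south
step on the line x = 0.\<close>
definition labellings :: "nat \<Rightarrow> nat \<Rightarrow> (nat \<Rightarrow> nat) \<Rightarrow> (nat \<Rightarrow> nat) set" where
  "labellings N l e = {P. (\<forall>i. i \<notin> {1..N} \<longrightarrow> P i = 0)
      \<and> (\<forall>i\<in>{1..<N}. e i = e (Suc i) \<longrightarrow> P i < P (Suc i))
      \<and> card {i\<in>{1..N}. P i = 0} = l
      \<and> (\<forall>i\<in>{1..N}. e i = 0 \<longrightarrow> P i \<noteq> 0)}"

definition dinv :: "nat \<Rightarrow> (nat \<Rightarrow> nat) \<Rightarrow> (nat \<Rightarrow> nat) \<Rightarrow> nat" where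
  "dinv N e P = card {(i,j). i \<in> {1..N} \<and> j \<in> {1..N} \<and> i < j \<and>
      ((rowarea e i = rowarea e j \<and> P i < P j) \<or> (rowarea e i = rowarea e j + 1 \<and> P i > P j))}"

text \<open>x^{wt_+(P)} is the monomial prod_{k >= 1} x_k ^ (mu k) iff this holds.\<close>
definition has_wt :: "nat \<Rightarrow> (nat \<Rightarrow> nat) \<Rightarrow> (nat \<Rightarrow> nat) \<Rightarrow> bool" where
  "has_wt N P \<mu> \<longleftrightarrow> (\<forall>k\<ge>1. card {i\<in>{1..N}. P i = k} = \<mu> k)"

text \<open>Coefficient of x^mu in the left-hand sum, as a polynomial in z.\<close>
definition lhs_poly :: "nat \<Rightarrow> nat \<Rightarrow> (nat \<Rightarrow> nat) \<Rightarrow> 'a::field \<Rightarrow> 'a \<Rightarrow> 'a poly" where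
  "lhs_poly N l \<mu> q t =
     (\<Sum>e\<in>dyck N. \<Sum>P\<in>{P\<in>labellings N l e. has_wt N P \<mu>}.
        smult (t ^ area N e * q ^ dinv N e P)
          (\<Prod>i\<in>{i\<in>{2..N}. colarea N e i = colarea N e (i - 1) + 1}.
              [:1, inverse (t ^ colarea N e i):]))"

definition dstat :: "nat \<Rightarrow> (nat \<Rightarrow> nat) \<Rightarrow> (nat \<Rightarrow> nat) \<Rightarrow> nat" where
  "dstat m \<eta> \<tau> = (\<Sum>j\<in>{1..m}. \<Sum>r\<in>{j<..m}.
      card ({\<eta> j..\<eta> j + \<tau> j} \<inter> {\<eta> r..<\<eta> r + \<tau> r}))"

definition hstat :: "nat \<Rightarrow> nat set \<Rightarrow> (nat \<Rightarrow> nat) \<Rightarrow> nat" where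
  "hstat n I \<eta> = card {(r,s). 1 \<le> r \<and> r < s \<and> s \<le> n \<and> r \<in> I \<and> s \<notin> I \<and> \<eta> s = \<eta> r + 1}"

definition rs_boxes :: "nat \<Rightarrow> (nat \<Rightarrow> int) \<Rightarrow> (nat \<Rightarrow> int) \<Rightarrow> (nat \<times> int) set" where
  "rs_boxes n \<alpha> \<beta> = {(j,i). j \<in> {1..n} \<and> \<alpha> j < i \<and> i \<le> \<beta> j}"

definition row_strict :: "nat \<Rightarrow> (nat \<Rightarrow> int) \<Rightarrow> (nat \<Rightarrow> int) \<Rightarrow> (nat \<times> int \<Rightarrow> nat) \<Rightarrow> bool" where
  "row_strict n \<alpha> \<beta> S \<longleftrightarrow>
     (\<forall>b\<in>rs_boxes n \<alpha> \<beta>. 1 \<le> S b) \<and> (\<forall>b. b \<notin> rs_boxes n \<alpha> \<beta> \<longrightarrow> S b = 0) \<and>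
     (\<forall>j i. (j,i) \<in> rs_boxes n \<alpha> \<beta> \<and> (j,i+1) \<in> rs_boxes n \<alpha> \<beta> \<longrightarrow> S (j,i) < S (j,i+1))"

text \<open>Increasing w0-triples: a triple is determined by v = (r,i), a box, and the row
j > r containing/adjacent to u = (j,i) and w = (j,i+1); this requires
alpha j <= i <= beta j.  u is adjacent to the left end iff i = alpha j (S(u) = -infinity),
w is adjacent to the right end iff i = beta j (S(w) = +infinity).\<close>
definition hw0 :: "nat \<Rightarrow> (nat \<Rightarrow> int) \<Rightarrow> (nat \<Rightarrow> int) \<Rightarrow> (nat \<times> int \<Rightarrow> nat) \<Rightarrow> nat" where
  "hw0 n \<alpha> \<beta> S = card {(r,j,i). (r,i) \<in> rs_boxes n \<alpha> \<beta> \<and> r < j \<and> j \<le> n \<and>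
       \<alpha> j \<le> i \<and> i \<le> \<beta> j \<and>
       (i = \<alpha> j \<or> S (j,i) < S (r,i)) \<and> (i = \<beta> j \<or> S (r,i) < S (j,i+1))}"

text \<open>Coefficient of x^mu (monomial prod_{k >= 1} x_k^(mu k)) in N_{beta/alpha}(X;q).\<close>
definition Ncoef :: "nat \<Rightarrow> (nat \<Rightarrow> int) \<Rightarrow> (nat \<Rightarrow> int) \<Rightarrow> (nat \<Rightarrow> nat) \<Rightarrow> 'a::field \<Rightarrow> 'a" where
  "Ncoef n \<alpha> \<beta> \<mu> q =
     (if \<exists>j\<in>{1..n}. \<alpha> j > \<beta> j then 0
      else (\<Sum>S\<in>{S. row_strict n \<alpha> \<beta> S \<and>
                   (\<forall>k\<ge>1. card {b\<in>rs_boxes n \<alpha> \<beta>. S b = k} = \<mu> k)}.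
              q ^ hw0 n \<alpha> \<beta> S))"

text \<open>Right-hand side data: alpha = (a,0) + eps_J, beta = (0,a) + (1^m) + tau, with a
indexed by [1,m-1] and tau by [1,m] (both zero elsewhere).\<close>
definition alphaJ :: "nat set \<Rightarrow> (nat \<Rightarrow> nat) \<Rightarrow> nat \<Rightarrow> int" where
  "alphaJ J a j = int (a j + (if j \<in> J then 1 else 0))"

definition betaT :: "(nat \<Rightarrow> nat) \<Rightarrow> (nat \<Rightarrow> nat) \<Rightarrow> nat \<Rightarrow> int" where
  "betaT a \<tau> j = int (a (j - 1) + 1 + \<tau> j)"

text \<open>Index set of the right-hand sum.  Terms with alpha_j > beta_j for some j vanish
by the convention N_{beta/alpha} = 0, so they are omitted (this makes the sum finite).\<close>
definition rhs_index :: "nat \<Rightarrow> nat \<Rightarrow> nat \<Rightarrow> (nat set \<times> (nat \<Rightarrow> nat) \<times> (nat \<Rightarrow> nat)) set" where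
  "rhs_index N m l = {(J,a,\<tau>). J \<subseteq> {1..m-1} \<and> card J = l \<and>
      (\<forall>i. i \<notin> {1..m-1} \<longrightarrow> a i = 0) \<and> (\<forall>i. i \<notin> {1..m} \<longrightarrow> \<tau> i = 0) \<and>
      (\<Sum>j=1..m. \<tau> j) = N - m \<and>
      (\<forall>j\<in>{1..m}. alphaJ J a j \<le> betaT a \<tau> j)}"

end

theory Submission
  imports Defs
begin


lemma subsets_card_insert:
  assumes "finite A" "x \<notin> A"
  shows "{K. K \<subseteq> insert x A \<and> card K = Suc d} =
         {K. K \<subseteq> A \<and> card K = Suc d} \<union> insert x ` {K. K \<subseteq> A \<and> card K = d}"
proof (intro equalityI subsetI)
  fix K assume K: "K \<in> {K. K \<subseteq> insert x A \<and> card K = Suc d}"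
  show "K \<in> {K. K \<subseteq> A \<and> card K = Suc d} \<union> insert x ` {K. K \<subseteq> A \<and> card K = d}"
  proof (cases "x \<in> K")
    case True
    have fK: "finite K" using K assms(1) finite_subset by auto
    have "K = insert x (K - {x})" using True by auto
    moreover have "K - {x} \<subseteq> A" using K by auto
    moreover have "card (K - {x}) = d" using K True fK by simp
    ultimately show ?thesis by blast
  next
    case False
    then show ?thesis using K by auto
  qed
next
  fix K assume "K \<in> {K. K \<subseteq> A \<and> card K = Suc d} \<union> insert x ` {K. K \<subseteq> A \<and> card K = d}"
  then show "K \<in> {K. K \<subseteq> insert x A \<and> card K = Suc d}"
  proof
    assume "K \<in> {K. K \<subseteq> A \<and> card K = Suc d}" then show ?thesis by auto
  next
    assume "K \<in> insert x ` {K. K \<subseteq> A \<and> card K = d}"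
    then obtain K' where K': "K = insert x K'" "K' \<subseteq> A" "card K' = d" by auto
    have "finite K'" using K' assms(1) finite_subset by auto
    moreover have "x \<notin> K'" using K' assms by auto
    ultimately show ?thesis using K' by auto
  qed
qed

lemma coeff_prod_lin:
  fixes f :: "'b \<Rightarrow> 'a::comm_ring_1"
  assumes "finite A"
  shows "coeff (\<Prod>i\<in>A. [:1, f i:]) d = (\<Sum>K\<in>{K. K \<subseteq> A \<and> card K = d}. \<Prod>i\<in>K. f i)"
  using assms
proof (induction A arbitrary: d rule: finite_induct)
  case empty
  show ?case
  proof (cases d)
    case 0
    have e: "{K. K \<subseteq> {} \<and> card K = d} = {{}}" using 0 by auto
    show ?thesis unfolding e using 0 by simp
  next
    case (Suc d')
    have e: "{K. K \<subseteq> ({}::'b set) \<and> card K = d} = {}" using Suc by auto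
    show ?thesis unfolding e using Suc by simp
  qed
next
  case (insert x A)
  have fin: "finite {K. K \<subseteq> A \<and> card K = d'}" for d'
    by (rule finite_subset[of _ "Pow A"]) (use insert(1) in auto)
  show ?case
  proof (cases d)
    case 0
    have "{K. K \<subseteq> insert x A \<and> card K = d} = {{}}"
    proof (intro equalityI subsetI)
      fix K assume "K \<in> {K. K \<subseteq> insert x A \<and> card K = d}"
      moreover then have "finite K" using insert(1) finite_subset[of K "insert x A"] by auto
      ultimately show "K \<in> {{}}" using 0 by auto
    qed (use 0 in auto)
    moreover have "coeff (\<Prod>i\<in>insert x A. [:1, f i:]) 0 = 1"
    proof -
      have "coeff (\<Prod>i\<in>B. [:1, f i:]) 0 = 1" if "finite B" for B
        using that by (induction B rule: finite_induct) (auto simp: coeff_mult_0)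
      then show ?thesis using insert(1) by simp
    qed
    ultimately show ?thesis using 0 by simp
  next
    case (Suc d')
    have prod: "(\<Prod>i\<in>insert x A. [:1, f i:]) = [:1, f x:] * (\<Prod>i\<in>A. [:1, f i:])"
      using insert by simp
    have cm: "coeff ([:1, c:] * p) (Suc n) = coeff p (Suc n) + c * coeff p n" for c :: 'a and p n
      by (simp add: mult_pCons_left)
    have inj: "inj_on (insert x) {K. K \<subseteq> A \<and> card K = d'}"
    proof (rule inj_onI)
      fix K1 K2 assume "K1 \<in> {K. K \<subseteq> A \<and> card K = d'}" "K2 \<in> {K. K \<subseteq> A \<and> card K = d'}"
        "insert x K1 = insert x K2"
      then have "insert x K1 - {x} = insert x K2 - {x}" "x \<notin> K1" "x \<notin> K2" using insert(2) by auto
      then show "K1 = K2" by simp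
    qed
    have disj: "{K. K \<subseteq> A \<and> card K = Suc d'} \<inter> insert x ` {K. K \<subseteq> A \<and> card K = d'} = {}"
      using insert(2) by auto
    have "(\<Sum>K\<in>{K. K \<subseteq> insert x A \<and> card K = d}. \<Prod>i\<in>K. f i)
        = (\<Sum>K\<in>{K. K \<subseteq> A \<and> card K = Suc d'}. \<Prod>i\<in>K. f i)
          + (\<Sum>K\<in>insert x ` {K. K \<subseteq> A \<and> card K = d'}. \<Prod>i\<in>K. f i)"
      unfolding Suc subsets_card_insert[OF insert(1,2)]
      by (rule sum.union_disjoint) (use fin disj in auto)
    also have "(\<Sum>K\<in>insert x ` {K. K \<subseteq> A \<and> card K = d'}. \<Prod>i\<in>K. f i)
        = (\<Sum>K\<in>{K. K \<subseteq> A \<and> card K = d'}. f x * (\<Prod>i\<in>K. f i))"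
      apply (subst sum.reindex[OF inj])
      apply (rule sum.cong[OF refl])
      subgoal for K
        proof -
          assume K: "K \<in> {K. K \<subseteq> A \<and> card K = d'}"
          then have "finite K" "x \<notin> K" using insert(1,2) finite_subset[of K A] by auto
          then show ?thesis by simp
        qed
      done
    finally show ?thesis
      unfolding prod Suc cm insert.IH by (simp add: sum_distrib_left)
  qed
qed



lemma exists_band:
  fixes f :: "nat \<Rightarrow> nat"
  assumes "i \<le> f 0" "f n < i"
  shows "\<exists>s\<in>{1..n}. f s < i \<and> i \<le> f (s - 1)"
  using assms
proof (induction n)
  case 0 then show ?case by simp
next
  case (Suc n)
  show ?case
  proof (cases "f n < i")
    case True
    then obtain s where "s\<in>{1..n}" "f s < i \<and> i \<le> f (s - 1)" using Suc by auto
    then show ?thesis by (intro bexI[of _ s]) auto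
  next
    case False
    then show ?thesis using Suc.prems by (intro bexI[of _ "Suc n"]) auto
  qed
qed

locale ATloc =
  fixes N m :: nat and a \<tau> :: "nat \<Rightarrow> nat"
  assumes m1: "1 \<le> m" and mN: "m \<le> N"
    and a_out: "\<And>i. i \<notin> {1..m-1} \<Longrightarrow> a i = 0"
    and t_out: "\<And>i. i \<notin> {1..m} \<Longrightarrow> \<tau> i = 0"
    and t_sum: "(\<Sum>j=1..m. \<tau> j) = N - m"
    and a_le: "\<And>j. j \<in> {1..m} \<Longrightarrow> a j \<le> a (j-1) + 1 + \<tau> j"
begin

definition ST :: "nat \<Rightarrow> nat" where "ST s = (\<Sum>t=1..s. \<tau> t)"
definition k :: "nat \<Rightarrow> nat" where "k s = N - s - ST s"
definition A :: "nat \<Rightarrow> nat" where "A s = a s + k s"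
definition b :: "nat \<Rightarrow> nat" where "b s = a (s-1) + 1 + \<tau> s"

lemma a0: "a 0 = 0" using a_out by simp
lemma am: "a m = 0" using a_out m1 by simp

lemma ST_Suc: "ST (Suc s) = ST s + \<tau> (Suc s)"
  unfolding ST_def by simp

lemma ST_le: "s \<le> m \<Longrightarrow> ST s \<le> N - m"
  unfolding ST_def t_sum[symmetric] by (rule sum_mono2) auto

lemma sST_le: "s \<le> m \<Longrightarrow> s + ST s \<le> N"
  using ST_le mN by fastforce

lemma STm: "ST m = N - m" unfolding ST_def t_sum ..

lemma k0: "k 0 = N" unfolding k_def ST_def by simp
lemma km: "k m = 0" unfolding k_def STm using mN by simp

lemma k_step: "s \<in> {1..m} \<Longrightarrow> k (s-1) = k s + 1 + \<tau> s"
proof -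
  assume s: "s \<in> {1..m}"
  then obtain s' where s': "s = Suc s'" by (cases s) auto
  have "Suc s' + ST (Suc s') \<le> N" using sST_le[of "Suc s'"] s s' by simp
  then show ?thesis unfolding k_def s' using ST_Suc by simp
qed

lemma k_mono: "s \<le> s' \<Longrightarrow> s' \<le> m \<Longrightarrow> k s' + (s' - s) \<le> k s"
proof (induction s' rule: nat_induct)
  case 0 then show ?case by simp
next
  case (Suc n)
  show ?case
  proof (cases "s = Suc n")
    case True then show ?thesis by simp
  next
    case False
    then have "s \<le> n" using Suc by simp
    then have "k n + (n - s) \<le> k s" using Suc by simp
    moreover have "k n = k (Suc n) + 1 + \<tau> (Suc n)" using k_step[of "Suc n"] Suc by simp
    ultimately show ?thesis using \<open>s \<le> n\<close> by simp
  qed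
qed

lemma k_strict: "s < s' \<Longrightarrow> s' \<le> m \<Longrightarrow> k s' < k s"
  using k_mono[of s s'] by simp

lemma k_anti: "s \<le> s' \<Longrightarrow> s' \<le> m \<Longrightarrow> k s' \<le> k s"
  using k_mono[of s s'] by simp

lemma k_pos: "s < m \<Longrightarrow> 1 \<le> k s"
  using k_mono[of s m] km by simp

lemma k_le_N: "k s \<le> N" unfolding k_def by simp

lemma A0: "A 0 = N" unfolding A_def using a0 k0 by simp
lemma Am: "A m = 0" unfolding A_def using am km by simp

lemma A_step: "s \<in> {1..m} \<Longrightarrow> A (s-1) = b s + k s"
  unfolding A_def b_def using k_step by simp

lemma A_le: "s \<in> {1..m} \<Longrightarrow> A s \<le> A (s-1)"
  using A_step a_le unfolding A_def b_def by fastforce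

lemma A_anti: "s \<le> s' \<Longrightarrow> s' \<le> m \<Longrightarrow> A s' \<le> A s"
proof (induction s' rule: nat_induct)
  case 0 then show ?case by simp
next
  case (Suc n)
  show ?case
  proof (cases "s = Suc n")
    case True then show ?thesis by simp
  next
    case False
    then have "A n \<le> A s" using Suc by simp
    moreover have "A (Suc n) \<le> A n" using A_le[of "Suc n"] Suc by simp
    ultimately show ?thesis by simp
  qed
qed

lemma A_le_N: "s \<le> m \<Longrightarrow> A s \<le> N" using A_anti[of 0 s] A0 by simp

lemma ab: "s \<in> {1..m} \<Longrightarrow> a s \<le> b s" using a_le unfolding b_def by simp

lemma b_le: "s \<in> {1..m} \<Longrightarrow> b s + k s \<le> N"
proof -
  assume s: "s \<in> {1..m}"
  then have "s - 1 \<le> m" by auto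
  then show ?thesis using A_step[OF s] A_le_N[of "s-1"] by simp
qed

lemma band_ex: "i \<in> {1..N} \<Longrightarrow> \<exists>s\<in>{1..m}. A s < i \<and> i \<le> A (s-1)"
  by (rule exists_band) (use A0 Am in auto)

lemma band_uniq:
  assumes "s \<in> {1..m}" "A s < i" "i \<le> A (s-1)" "s' \<in> {1..m}" "A s' < i" "i \<le> A (s'-1)"
  shows "s = s'"
proof (rule ccontr)
  assume "s \<noteq> s'"
  then consider "s < s'" | "s' < s" by linarith
  then show False
  proof cases
    case 1
    then have "s \<le> s'-1" "s'-1 \<le> m" using assms by auto
    then have "A (s'-1) \<le> A s" using A_anti[of s "s'-1"] by simp
    then show False using assms by simp
  next
    case 2
    then have "s' \<le> s-1" "s-1 \<le> m" using assms by auto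
    then have "A (s-1) \<le> A s'" using A_anti[of s' "s-1"] by simp
    then show False using assms by simp
  qed
qed

definition rw :: "nat \<Rightarrow> nat" where
  "rw i = (THE s. s \<in> {1..m} \<and> A s < i \<and> i \<le> A (s-1))"

lemma rw_eq: "s \<in> {1..m} \<Longrightarrow> A s < i \<Longrightarrow> i \<le> A (s-1) \<Longrightarrow> rw i = s"
  unfolding rw_def by (rule the_equality) (use band_uniq in blast)+

lemma rw_prop: "i \<in> {1..N} \<Longrightarrow> rw i \<in> {1..m} \<and> A (rw i) < i \<and> i \<le> A (rw i - 1)"
  using band_ex[of i] rw_eq by metis

definition ee :: "nat \<Rightarrow> nat" where
  "ee i = (if i \<in> {1..N} then k (rw i) else 0)"

lemma ee_rw: "s \<in> {1..m} \<Longrightarrow> A s < i \<Longrightarrow> i \<le> A (s-1) \<Longrightarrow> ee i = k s"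
proof -
  assume s: "s \<in> {1..m}" "A s < i" "i \<le> A (s-1)"
  moreover have "s - 1 \<le> m" using s by auto
  ultimately have "i \<in> {1..N}" using A_le_N[of "s-1"] by auto
  then show ?thesis unfolding ee_def using rw_eq[OF s] by simp
qed

lemma rw_anti: "i \<in> {1..N} \<Longrightarrow> i' \<in> {1..N} \<Longrightarrow> i \<le> i' \<Longrightarrow> rw i' \<le> rw i"
proof (rule ccontr)
  assume i: "i \<in> {1..N}" "i' \<in> {1..N}" "i \<le> i'" "\<not> rw i' \<le> rw i"
  have "rw i \<le> rw i' - 1" "rw i' - 1 \<le> m" using rw_prop[OF i(1)] rw_prop[OF i(2)] i(4) by auto
  then have "A (rw i' - 1) \<le> A (rw i)" using A_anti[of "rw i" "rw i' - 1"] by simp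
  then show False using rw_prop[OF i(1)] rw_prop[OF i(2)] i(3) by simp
qed

lemma ee_dyck: "ee \<in> dyck N"
  unfolding dyck_def
proof (intro CollectI conjI ballI allI impI)
  fix i assume i: "i \<in> {1..N}"
  have "k (rw i) \<le> A (rw i)" unfolding A_def by simp
  moreover have "A (rw i) < i" using rw_prop[OF i] by simp
  ultimately have "k (rw i) \<le> i - 1" by linarith
  then show "ee i \<le> i - 1" using i unfolding ee_def by simp
next
  fix i assume i: "i \<in> {1..<N}"
  then have "rw (Suc i) \<le> rw i" using rw_anti[of i "Suc i"] by auto
  moreover have "rw i \<le> m" using rw_prop[of "i"] i by auto
  ultimately have "k (rw i) \<le> k (rw (Suc i))" using k_anti by blast
  moreover have "i \<in> {1..N}" "Suc i \<in> {1..N}" using i by auto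
  ultimately show "ee i \<le> ee (Suc i)" unfolding ee_def by simp
next
  fix i :: nat assume "i \<notin> {1..N}" then show "ee i = 0" unfolding ee_def by auto
qed

definition F :: "(nat \<times> int) set" where
  "F = {(s,x). s \<in> {1..m} \<and> int (a s) < x \<and> x \<le> int (b s)}"

definition phi :: "nat \<times> int \<Rightarrow> nat" where
  "phi c = nat (snd c) + k (fst c)"

definition psi :: "nat \<Rightarrow> nat \<times> int" where
  "psi i = (rw i, int i - int (k (rw i)))"

lemma phi_band: "(s,x) \<in> F \<Longrightarrow> A s < phi (s,x) \<and> phi (s,x) \<le> A (s-1)"
  unfolding F_def phi_def A_def using A_step[of s] unfolding A_def by auto

lemma phi_rw: "(s,x) \<in> F \<Longrightarrow> rw (phi (s,x)) = s"
  using phi_band rw_eq unfolding F_def by auto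

lemma phi_range: "c \<in> F \<Longrightarrow> phi c \<in> {1..N}"
proof -
  assume c: "c \<in> F"
  obtain s x where sx: "c = (s,x)" by (cases c)
  have "s \<in> {1..m}" using c sx unfolding F_def by auto
  moreover have "s - 1 \<le> m" using \<open>s \<in> {1..m}\<close> by auto
  ultimately show ?thesis using phi_band[of s x] c sx A_le_N[of "s-1"] by fastforce
qed

lemma ee_phi: "(s,x) \<in> F \<Longrightarrow> ee (phi (s,x)) = k s"
  using phi_rw phi_range unfolding ee_def by auto

lemma psi_F: "i \<in> {1..N} \<Longrightarrow> psi i \<in> F"
  using rw_prop[of i] A_step[of "rw i"] unfolding psi_def F_def A_def by auto

lemma phi_psi: "i \<in> {1..N} \<Longrightarrow> phi (psi i) = i"
  using rw_prop[of i] unfolding psi_def phi_def A_def by auto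

lemma psi_phi: "c \<in> F \<Longrightarrow> psi (phi c) = c"
proof -
  assume c: "c \<in> F"
  obtain s x where sx: "c = (s,x)" by (cases c)
  have "x > 0" using c sx unfolding F_def by auto
  then show ?thesis using phi_rw[of s x] c sx unfolding psi_def phi_def by auto
qed

lemma bij_phi: "bij_betw phi F {1..N}"
  by (rule bij_betw_byWitness[of _ psi]) (use psi_phi phi_psi phi_range psi_F in auto)

lemma rowarea_phi: "(s,x) \<in> F \<Longrightarrow> int (rowarea ee (phi (s,x))) = x - 1"
  using ee_phi[of s x] unfolding rowarea_def phi_def F_def by auto

end



lemma DH_point:
  fixes aj bj x :: int and qv qu qw :: nat and inJ :: bool
  assumes ab: "aj \<le> bj" and inJab: "inJ \<Longrightarrow> aj < bj"
    and hu: "aj < x \<Longrightarrow> x \<le> bj \<Longrightarrow> (qu = 0 \<longleftrightarrow> inJ \<and> x = aj + 1)"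
    and hw: "aj < x + 1 \<Longrightarrow> x + 1 \<le> bj \<Longrightarrow> (qw = 0 \<longleftrightarrow> inJ \<and> x = aj)"
    and st: "aj < x \<Longrightarrow> x + 1 \<le> bj \<Longrightarrow> qu < qw"
  shows "(of_bool (aj < x \<and> x \<le> bj \<and> qu < qv) + of_bool (aj < x + 1 \<and> x + 1 \<le> bj \<and> qv < qw) :: int)
    = of_bool (qv \<noteq> 0 \<and> aj + of_bool inJ \<le> x \<and> x \<le> bj \<and>
          (x = aj + of_bool inJ \<or> (if aj < x \<and> x \<le> bj then qu else 0) < qv) \<and>
          (x = bj \<or> qv < (if aj < x + 1 \<and> x + 1 \<le> bj then qw else 0)))
      + (of_bool (aj < x \<and> x < bj) - of_bool (x = aj \<and> aj = bj))
      + of_bool (qv = 0 \<and> \<not> inJ \<and> aj = x)"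
proof (cases inJ)
  case True
  then show ?thesis using assms by (cases "x = aj + 1"; cases "aj < x"; cases "x + 1 \<le> bj"; cases "x \<le> bj"; auto)
next
  case False
  then show ?thesis using assms by (cases "aj < x"; cases "x + 1 \<le> bj"; cases "x \<le> bj"; cases "x = aj"; auto)
qed


lemma sum_subset_prod:
  fixes h :: "'a \<times> 'b \<Rightarrow> 'c::comm_semiring_1"
  assumes "finite A" "finite B" "S \<subseteq> A \<times> B"
  shows "(\<Sum>c\<in>S. h c) = (\<Sum>x\<in>A. \<Sum>y\<in>B. of_bool ((x,y) \<in> S) * h (x,y))"
proof -
  have "(\<Sum>c\<in>S. h c) = (\<Sum>c\<in>(A \<times> B) \<inter> S. h c)" using assms(3) by (simp add: Int_absorb1)
  also have "\<dots> = (\<Sum>c\<in>A \<times> B. if c \<in> S then h c else 0)"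
    by (rule sum.inter_restrict) (use assms in simp)
  also have "\<dots> = (\<Sum>(x,y)\<in>A \<times> B. of_bool ((x,y) \<in> S) * h (x,y))"
    by (rule sum.cong) auto
  also have "\<dots> = (\<Sum>x\<in>A. \<Sum>y\<in>B. of_bool ((x,y) \<in> S) * h (x,y))"
    by (rule sum.cartesian_product[symmetric])
  finally show ?thesis .
qed

lemma card_subset_prod:
  assumes "finite A" "finite B" "S \<subseteq> A \<times> B"
  shows "(of_nat (card S) :: 'c::comm_semiring_1) = (\<Sum>x\<in>A. \<Sum>y\<in>B. of_bool ((x,y) \<in> S))"
  using sum_subset_prod[OF assms, of "\<lambda>_. (1::'c)"] by simp

lemma sum_delta_int:
  fixes X :: "int set"
  shows "finite X \<Longrightarrow> (\<Sum>x\<in>X. of_bool (x = x0) * g x) = (if x0 \<in> X then g x0 else (0::'c::comm_semiring_1))"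
proof -
  assume X: "finite X"
  have "(\<Sum>x\<in>X. of_bool (x = x0) * g x) = (\<Sum>x\<in>X. if x = x0 then g x else 0)"
    by (rule sum.cong) auto
  then show ?thesis using X by (simp add: sum.delta)
qed

lemma telescope_down:
  fixes f :: "nat \<Rightarrow> int"
  shows "r \<le> m \<Longrightarrow> (\<Sum>j\<in>{r<..m}. f (j-1) - f j) = f r - f m"
proof (induction m)
  case 0 then show ?case by simp
next
  case (Suc m)
  show ?case
  proof (cases "r = Suc m")
    case True then show ?thesis by simp
  next
    case False
    then have "r \<le> m" using Suc by simp
    then have "{r<..Suc m} = insert (Suc m) {r<..m}" by auto
    then show ?thesis using Suc.IH[OF \<open>r \<le> m\<close>] by simp
  qed
qed

lemma telescope_up:
  fixes g :: "nat \<Rightarrow> int"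
  shows "(\<Sum>r\<in>{1..<j}. g r - g (r-1)) = g (j-1) - g 0"
proof (induction j)
  case 0 then show ?case by simp
next
  case (Suc j)
  show ?case
  proof (cases j)
    case 0 then show ?thesis by simp
  next
    case (Suc j')
    then have "{1..<Suc j} = insert j {1..<j}" by auto
    then show ?thesis using Suc.IH Suc by simp
  qed
qed

locale labloc = ATloc +
  fixes P :: "nat \<Rightarrow> nat"
  assumes P_inc: "\<And>i. i \<in> {1..<N} \<Longrightarrow> ee i = ee (Suc i) \<Longrightarrow> P i < P (Suc i)"
    and P_nz: "\<And>i. i \<in> {1..N} \<Longrightarrow> ee i = 0 \<Longrightarrow> P i \<noteq> 0"
begin

definition Q :: "nat \<times> int \<Rightarrow> nat" where "Q c = P (phi c)"

definition JJ :: "nat set" where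
  "JJ = {s\<in>{1..m-1}. a s < b s \<and> Q (s, int (a s) + 1) = 0}"

definition SS :: "nat \<times> int \<Rightarrow> nat" where
  "SS c = (if c \<in> F then Q c else 0)"

lemma F_iff: "(s,x) \<in> F \<longleftrightarrow> s \<in> {1..m} \<and> int (a s) < x \<and> x \<le> int (b s)"
  unfolding F_def by simp

lemma Q_inc: "(s,x) \<in> F \<Longrightarrow> (s,x+1) \<in> F \<Longrightarrow> Q (s,x) < Q (s,x+1)"
proof -
  assume c: "(s,x) \<in> F" "(s,x+1) \<in> F"
  have x0: "x > 0" using c unfolding F_def by auto
  have ph: "phi (s,x+1) = Suc (phi (s,x))" unfolding phi_def using x0 by (simp add: nat_add_distrib)
  have "phi (s,x+1) \<in> {1..N}" using phi_range[OF c(2)] .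
  then have "phi (s,x) \<in> {1..<N}" using ph phi_range[OF c(1)] by auto
  moreover have "ee (phi (s,x)) = ee (Suc (phi (s,x)))" using ee_phi[OF c(1)] ee_phi[OF c(2)] ph by simp
  ultimately show ?thesis unfolding Q_def using P_inc ph by simp
qed

lemma Q_zero_iff:
  assumes c: "(s,x) \<in> F"
  shows "Q (s,x) = 0 \<longleftrightarrow> s \<in> JJ \<and> x = int (a s) + 1"
proof
  assume q: "Q (s,x) = 0"
  have x1: "x = int (a s) + 1"
  proof (rule ccontr)
    assume "x \<noteq> int (a s) + 1"
    then have "(s, x-1) \<in> F" using c unfolding F_def by auto
    then have "Q (s,x-1) < Q (s,x)" using Q_inc[of s "x-1"] c by simp
    then show False using q by simp
  qed
  have "s \<noteq> m"
  proof
    assume "s = m"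
    then have "ee (phi (s,x)) = 0" using ee_phi[OF c] km by simp
    then show False using P_nz[OF phi_range[OF c]] q unfolding Q_def by simp
  qed
  then have "s \<in> {1..m-1}" using c unfolding F_def by auto
  moreover have "a s < b s" using c x1 unfolding F_def by auto
  ultimately show "s \<in> JJ \<and> x = int (a s) + 1" unfolding JJ_def using q x1 by simp
next
  assume "s \<in> JJ \<and> x = int (a s) + 1"
  then show "Q (s,x) = 0" unfolding JJ_def by simp
qed

lemma JJ_sub: "JJ \<subseteq> {1..m-1}" unfolding JJ_def by auto

lemma JJ_ab: "s \<in> JJ \<Longrightarrow> a s < b s" unfolding JJ_def by auto

definition XX :: "int set" where "XX = {0..int N + 1}"

lemma F_sub: "F \<subseteq> {1..m} \<times> XX"
  unfolding F_def XX_def using b_le by force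

lemma F_x_in: "(r,x) \<in> F \<Longrightarrow> x \<in> XX \<and> x + 1 \<in> XX"
  unfolding F_def XX_def using b_le[of r] by auto

lemma finite_F: "finite F"
  using F_sub by (rule finite_subset) (simp add: XX_def)

lemma phi_lt_iff:
  assumes c: "(s,x) \<in> F" and c': "(s',x') \<in> F" and xx: "x = x' \<or> x = x' + 1"
  shows "phi (s,x) < phi (s',x') \<longleftrightarrow> s' < s"
proof -
  have b1: "A s < phi (s,x)" "phi (s,x) \<le> A (s-1)" using phi_band[OF c] by auto
  have b2: "A s' < phi (s',x')" "phi (s',x') \<le> A (s'-1)" using phi_band[OF c'] by auto
  have sm: "s \<in> {1..m}" "s' \<in> {1..m}" using c c' unfolding F_def by auto
  consider "s' < s" | "s = s'" | "s < s'" by linarith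
  then show ?thesis
  proof cases
    case 1
    then have "A (s-1) \<le> A s'" using A_anti[of s' "s-1"] sm by auto
    then show ?thesis using 1 b1 b2 by simp
  next
    case 2
    have "x > 0" "x' > 0" using c c' unfolding F_def by auto
    then show ?thesis using 2 xx unfolding phi_def by auto
  next
    case 3
    then have "A (s'-1) \<le> A s" using A_anti[of s "s'-1"] sm by auto
    then show ?thesis using 3 b1 b2 by simp
  qed
qed

definition Dset :: "(nat \<times> nat) set" where
  "Dset = {(i,j). i \<in> {1..N} \<and> j \<in> {1..N} \<and> i < j \<and>
      ((rowarea ee i = rowarea ee j \<and> P i < P j) \<or> (rowarea ee i = rowarea ee j + 1 \<and> P i > P j))}"

lemma dinv_Dset: "dinv N ee P = card Dset"
  unfolding dinv_def Dset_def ..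

lemma pair_iff:
  assumes c: "(s,x) \<in> F" and c': "(s',x') \<in> F"
  shows "(phi (s,x), phi (s',x')) \<in> Dset \<longleftrightarrow>
     s' < s \<and> ((x = x' \<and> Q (s,x) < Q (s',x')) \<or> (x = x' + 1 \<and> Q (s',x') < Q (s,x)))"
proof -
  have r1: "int (rowarea ee (phi (s,x))) = x - 1" using rowarea_phi[OF c] .
  have r2: "int (rowarea ee (phi (s',x'))) = x' - 1" using rowarea_phi[OF c'] .
  have e1: "rowarea ee (phi (s,x)) = rowarea ee (phi (s',x')) \<longleftrightarrow> x = x'" using r1 r2 by linarith
  have e2: "rowarea ee (phi (s,x)) = rowarea ee (phi (s',x')) + 1 \<longleftrightarrow> x = x' + 1" using r1 r2 by linarith
  show ?thesis
    unfolding Dset_def Q_def using phi_range[OF c] phi_range[OF c'] e1 e2 phi_lt_iff[OF c c']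
    by auto
qed

definition D :: "nat \<Rightarrow> int \<Rightarrow> nat \<Rightarrow> int" where
  "D r x j = of_bool ((j,x) \<in> F \<and> Q (j,x) < Q (r,x)) + of_bool ((j,x+1) \<in> F \<and> Q (r,x) < Q (j,x+1))"

lemma dinv_sum:
  "int (dinv N ee P) = (\<Sum>r\<in>{1..m}. \<Sum>x\<in>XX. of_bool ((r,x) \<in> F) * (\<Sum>j\<in>{1..m}. of_bool (r < j) * D r x j))"
proof -
  have fX: "finite XX" unfolding XX_def by simp
  have "int (dinv N ee P) = (\<Sum>i\<in>{1..N}. \<Sum>i'\<in>{1..N}. of_bool ((i,i') \<in> Dset))"
    unfolding dinv_Dset by (rule card_subset_prod) (auto simp: Dset_def)
  also have "\<dots> = (\<Sum>c\<in>F. \<Sum>i'\<in>{1..N}. of_bool ((phi c, i') \<in> Dset))"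
    by (rule sum.reindex_bij_betw[OF bij_phi, symmetric])
  also have "\<dots> = (\<Sum>c\<in>F. \<Sum>c'\<in>F. of_bool ((phi c, phi c') \<in> Dset))"
    by (rule sum.cong[OF refl], rule sum.reindex_bij_betw[OF bij_phi, symmetric])
  also have "\<dots> = (\<Sum>c'\<in>F. \<Sum>c\<in>F. of_bool ((phi c, phi c') \<in> Dset))"
    by (rule sum.swap)
  also have "\<dots> = (\<Sum>c'\<in>F. (\<Sum>j\<in>{1..m}. of_bool (fst c' < j) * D (fst c') (snd c') j))"
  proof (rule sum.cong[OF refl])
    fix c' assume c': "c' \<in> F"
    obtain r x' where rx: "c' = (r,x')" by (cases c')
    have "(\<Sum>c\<in>F. of_bool ((phi c, phi c') \<in> Dset) :: int) =
        (\<Sum>j\<in>{1..m}. \<Sum>x\<in>XX. of_bool ((j,x) \<in> F) * of_bool ((phi (j,x), phi c') \<in> Dset))"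
      using sum_subset_prod[OF _ fX F_sub, of "\<lambda>c. of_bool ((phi c, phi c') \<in> Dset) :: int"] by simp
    also have "\<dots> = (\<Sum>j\<in>{1..m}. \<Sum>x\<in>XX. of_bool (r < j) *
          (of_bool (x = x') * of_bool ((j,x) \<in> F \<and> Q (j,x) < Q (r,x')) +
           of_bool (x = x' + 1) * of_bool ((j,x) \<in> F \<and> Q (r,x') < Q (j,x))))"
    proof (intro sum.cong[OF refl])
      fix j x
      show "of_bool ((j,x) \<in> F) * of_bool ((phi (j,x), phi c') \<in> Dset) =
          (of_bool (r < j) * (of_bool (x = x') * of_bool ((j,x) \<in> F \<and> Q (j,x) < Q (r,x')) +
           of_bool (x = x' + 1) * of_bool ((j,x) \<in> F \<and> Q (r,x') < Q (j,x))) :: int)"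
        using pair_iff[of j x r x'] c' rx by (cases "(j,x) \<in> F") auto
    qed
    also have "\<dots> = (\<Sum>j\<in>{1..m}. of_bool (r < j) * D r x' j)"
    proof (rule sum.cong[OF refl])
      fix j
      define G1 where "G1 x = (of_bool ((j,x) \<in> F \<and> Q (j,x) < Q (r,x')) :: int)" for x
      define G2 where "G2 x = (of_bool ((j,x) \<in> F \<and> Q (r,x') < Q (j,x)) :: int)" for x
      have xin: "x' \<in> XX" "x' + 1 \<in> XX" using F_x_in[of r x'] c' rx by auto
      have "(\<Sum>x\<in>XX. of_bool (r < j) * (of_bool (x = x') * G1 x + of_bool (x = x' + 1) * G2 x))
          = of_bool (r < j) * ((\<Sum>x\<in>XX. of_bool (x = x') * G1 x) + (\<Sum>x\<in>XX. of_bool (x = x' + 1) * G2 x))"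
        by (simp only: sum_distrib_left[symmetric] sum.distrib)
      also have "\<dots> = of_bool (r < j) * (G1 x' + G2 (x' + 1))"
        using sum_delta_int[OF fX, of x' G1] sum_delta_int[OF fX, of "x'+1" G2] xin by simp
      also have "\<dots> = of_bool (r < j) * D r x' j" unfolding G1_def G2_def D_def by simp
      finally show "(\<Sum>x\<in>XX. of_bool (r < j) * (of_bool (x = x') * of_bool ((j,x) \<in> F \<and> Q (j,x) < Q (r,x')) +
           of_bool (x = x' + 1) * of_bool ((j,x) \<in> F \<and> Q (r,x') < Q (j,x)))) = of_bool (r < j) * D r x' j"
        unfolding G1_def G2_def .
    qed
    finally show "(\<Sum>c\<in>F. of_bool ((phi c, phi c') \<in> Dset)) = (\<Sum>j\<in>{1..m}. of_bool (fst c' < j) * D (fst c') (snd c') j)"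
      using rx by simp
  qed
  also have "\<dots> = (\<Sum>r\<in>{1..m}. \<Sum>x\<in>XX. of_bool ((r,x) \<in> F) * (\<Sum>j\<in>{1..m}. of_bool (r < j) * D r x j))"
    using sum_subset_prod[OF _ fX F_sub, of "\<lambda>c'. (\<Sum>j\<in>{1..m}. of_bool (fst c' < j) * D (fst c') (snd c') j)"]
    by simp
  finally show ?thesis .
qed

lemma alphaJ_eq: "alphaJ JJ a j = int (a j) + of_bool (j \<in> JJ)"
  unfolding alphaJ_def by simp

lemma betaT_eq: "betaT a \<tau> j = int (b j)"
  unfolding betaT_def b_def by simp

lemma boxes_eq: "rs_boxes m (alphaJ JJ a) (betaT a \<tau>) = {c\<in>F. Q c \<noteq> 0}"
proof (intro equalityI subsetI)
  fix c assume c: "c \<in> rs_boxes m (alphaJ JJ a) (betaT a \<tau>)"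
  obtain s x where sx: "c = (s,x)" by (cases c)
  have h: "s \<in> {1..m}" "int (a s) + of_bool (s \<in> JJ) < x" "x \<le> int (b s)"
    using c sx unfolding rs_boxes_def alphaJ_eq betaT_eq by auto
  then have "(s,x) \<in> F" unfolding F_def by (cases "s \<in> JJ") auto
  moreover have "Q (s,x) \<noteq> 0" using Q_zero_iff[OF \<open>(s,x) \<in> F\<close>] h by (cases "s \<in> JJ") auto
  ultimately show "c \<in> {c\<in>F. Q c \<noteq> 0}" using sx by simp
next
  fix c assume c: "c \<in> {c\<in>F. Q c \<noteq> 0}"
  obtain s x where sx: "c = (s,x)" by (cases c)
  have "(s,x) \<in> F" "Q (s,x) \<noteq> 0" using c sx by auto
  then have "s \<in> {1..m}" "int (a s) < x" "x \<le> int (b s)" "\<not> (s \<in> JJ \<and> x = int (a s) + 1)"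
    using Q_zero_iff[of s x] unfolding F_def by auto
  then show "c \<in> rs_boxes m (alphaJ JJ a) (betaT a \<tau>)"
    using sx unfolding rs_boxes_def alphaJ_eq betaT_eq by auto
qed

definition Hc :: "nat \<Rightarrow> int \<Rightarrow> nat \<Rightarrow> int" where
  "Hc r x j = of_bool (Q (r,x) \<noteq> 0 \<and> int (a j) + of_bool (j \<in> JJ) \<le> x \<and> x \<le> int (b j) \<and>
      (x = int (a j) + of_bool (j \<in> JJ) \<or> SS (j,x) < Q (r,x)) \<and>
      (x = int (b j) \<or> Q (r,x) < SS (j,x+1)))"

definition Tset :: "(nat \<times> nat \<times> int) set" where
  "Tset = {(r,j,i). (r,i) \<in> rs_boxes m (alphaJ JJ a) (betaT a \<tau>) \<and> r < j \<and> j \<le> m \<and>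
       alphaJ JJ a j \<le> i \<and> i \<le> betaT a \<tau> j \<and>
       (i = alphaJ JJ a j \<or> SS (j,i) < SS (r,i)) \<and> (i = betaT a \<tau> j \<or> SS (r,i) < SS (j,i+1))}"

lemma hw0_Tset: "hw0 m (alphaJ JJ a) (betaT a \<tau>) SS = card Tset"
  unfolding hw0_def Tset_def ..

lemma hw0_sum:
  "int (hw0 m (alphaJ JJ a) (betaT a \<tau>) SS) =
     (\<Sum>r\<in>{1..m}. \<Sum>x\<in>XX. of_bool ((r,x) \<in> F) * (\<Sum>j\<in>{1..m}. of_bool (r < j) * Hc r x j))"
proof -
  have fX: "finite XX" unfolding XX_def by simp
  have sub: "Tset \<subseteq> {1..m} \<times> ({1..m} \<times> XX)"
  proof
    fix t assume t: "t \<in> Tset"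
    obtain r j x where rjx: "t = (r,j,x)" by (cases t) auto
    have "(r,x) \<in> F" using t rjx boxes_eq unfolding Tset_def by auto
    then show "t \<in> {1..m} \<times> ({1..m} \<times> XX)" using t rjx F_sub unfolding Tset_def by auto
  qed
  have "int (card Tset) = (\<Sum>r\<in>{1..m}. \<Sum>p\<in>{1..m} \<times> XX. of_bool ((r,p) \<in> Tset))"
    by (rule card_subset_prod[OF _ _ sub]) (use fX in auto)
  also have "\<dots> = (\<Sum>r\<in>{1..m}. \<Sum>j\<in>{1..m}. \<Sum>x\<in>XX. of_bool ((r,j,x) \<in> Tset))"
    by (simp add: sum.cartesian_product)
  also have "\<dots> = (\<Sum>r\<in>{1..m}. \<Sum>x\<in>XX. \<Sum>j\<in>{1..m}. of_bool ((r,j,x) \<in> Tset))"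
    by (rule sum.cong[OF refl], rule sum.swap)
  also have "\<dots> = (\<Sum>r\<in>{1..m}. \<Sum>x\<in>XX. of_bool ((r,x) \<in> F) * (\<Sum>j\<in>{1..m}. of_bool (r < j) * Hc r x j))"
  proof (intro sum.cong[OF refl])
    fix r x assume r: "r \<in> {1..m}"
    have "(\<Sum>j\<in>{1..m}. of_bool ((r,j,x) \<in> Tset)) = (\<Sum>j\<in>{1..m}. of_bool ((r,x) \<in> F) * (of_bool (r < j) * Hc r x j))"
    proof (rule sum.cong[OF refl])
      fix j assume j: "j \<in> {1..m}"
      show "of_bool ((r,j,x) \<in> Tset) = (of_bool ((r,x) \<in> F) * (of_bool (r < j) * Hc r x j) :: int)"
      proof (cases "(r,x) \<in> F")
        case True
        then have "SS (r,x) = Q (r,x)" unfolding SS_def by simp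
        then show ?thesis using True j unfolding Tset_def Hc_def boxes_eq alphaJ_eq betaT_eq by auto
      next
        case False
        then show ?thesis unfolding Tset_def boxes_eq by auto
      qed
    qed
    then show "(\<Sum>j\<in>{1..m}. of_bool ((r,j,x) \<in> Tset)) = of_bool ((r,x) \<in> F) * (\<Sum>j\<in>{1..m}. of_bool (r < j) * Hc r x j)"
      by (simp only: sum_distrib_left)
  qed
  finally show ?thesis unfolding hw0_Tset .
qed

definition Z :: "nat \<Rightarrow> int \<Rightarrow> nat \<Rightarrow> int" where
  "Z r x j = of_bool (Q (r,x) = 0 \<and> j \<notin> JJ \<and> int (a j) = x)"

definition Dl :: "int \<Rightarrow> nat \<Rightarrow> int" where
  "Dl x j = of_bool (int (a j) < x \<and> x < int (b j)) - of_bool (x = int (a j) \<and> int (a j) = int (b j))"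

lemma DHZ:
  assumes r: "(r,x) \<in> F" and j: "j \<in> {1..m}"
  shows "D r x j = Hc r x j + Dl x j + Z r x j"
proof -
  have Fj: "(j,y) \<in> F \<longleftrightarrow> int (a j) < y \<and> y \<le> int (b j)" for y using j F_iff by simp
  have hu: "Q (j,x) = 0 \<longleftrightarrow> j \<in> JJ \<and> x = int (a j) + 1" if "int (a j) < x" "x \<le> int (b j)"
    using Q_zero_iff[of j x] Fj that by simp
  have hw: "Q (j,x+1) = 0 \<longleftrightarrow> j \<in> JJ \<and> x = int (a j)" if "int (a j) < x + 1" "x + 1 \<le> int (b j)"
    using Q_zero_iff[of j "x+1"] Fj that by simp
  have st: "Q (j,x) < Q (j,x+1)" if "int (a j) < x" "x + 1 \<le> int (b j)"
    using Q_inc[of j x] Fj that by simp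
  have SSj: "SS (j,y) = (if int (a j) < y \<and> y \<le> int (b j) then Q (j,y) else 0)" for y
    unfolding SS_def using Fj by simp
  have "D r x j = (of_bool (int (a j) < x \<and> x \<le> int (b j) \<and> Q (j,x) < Q (r,x)) +
                  of_bool (int (a j) < x + 1 \<and> x + 1 \<le> int (b j) \<and> Q (r,x) < Q (j,x+1)))"
    unfolding D_def Fj by simp
  also have "\<dots> = Hc r x j + Dl x j + Z r x j"
    unfolding Hc_def Dl_def Z_def SSj
    by (rule DH_point[where inJ = "j \<in> JJ"]) (use ab[OF j] JJ_ab hu hw st in auto)
  finally show ?thesis .
qed

lemma dinv_split:
  "int (dinv N ee P) =
     int (hw0 m (alphaJ JJ a) (betaT a \<tau>) SS)
     + (\<Sum>r\<in>{1..m}. \<Sum>x\<in>XX. of_bool ((r,x) \<in> F) * (\<Sum>j\<in>{1..m}. of_bool (r < j) * Dl x j))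
     + (\<Sum>r\<in>{1..m}. \<Sum>x\<in>XX. of_bool ((r,x) \<in> F) * (\<Sum>j\<in>{1..m}. of_bool (r < j) * Z r x j))"
proof -
  have "int (dinv N ee P) = (\<Sum>r\<in>{1..m}. \<Sum>x\<in>XX. of_bool ((r,x) \<in> F) * (\<Sum>j\<in>{1..m}. of_bool (r < j) * (Hc r x j + Dl x j + Z r x j)))"
    unfolding dinv_sum
  proof (intro sum.cong[OF refl])
    fix r x
    show "of_bool ((r,x) \<in> F) * (\<Sum>j\<in>{1..m}. of_bool (r < j) * D r x j) =
          of_bool ((r,x) \<in> F) * (\<Sum>j\<in>{1..m}. of_bool (r < j) * (Hc r x j + Dl x j + Z r x j))"
      using DHZ[of r x] by (cases "(r,x) \<in> F") (auto intro!: sum.cong)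
  qed
  then show ?thesis unfolding hw0_sum
    by (simp add: distrib_left sum.distrib)
qed

lemma Z_sum:
  "(\<Sum>r\<in>{1..m}. \<Sum>x\<in>XX. of_bool ((r,x) \<in> F) * (\<Sum>j\<in>{1..m}. of_bool (r < j) * Z r x j))
     = int (hstat (m-1) JJ a)"
proof -
  have fX: "finite XX" unfolding XX_def by simp
  define G where "G r = (\<Sum>j\<in>{1..m}. of_bool (r \<in> JJ \<and> r < j \<and> j \<notin> JJ \<and> a j = a r + 1) :: int)" for r
  have step: "of_bool ((r,x) \<in> F) * (\<Sum>j\<in>{1..m}. of_bool (r < j) * Z r x j) = of_bool (x = int (a r) + 1) * G r"
    if r: "r \<in> {1..m}" for r x
  proof (cases "(r,x) \<in> F")
    case True
    show ?thesis
    proof (cases "r \<in> JJ \<and> x = int (a r) + 1")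
      case True2: True
      then have "Q (r,x) = 0" using Q_zero_iff[OF True] by simp
      then have "of_bool (r < j) * Z r x j = of_bool (r \<in> JJ \<and> r < j \<and> j \<notin> JJ \<and> a j = a r + 1)" for j
        using True2 unfolding Z_def by auto
      then have "(\<Sum>j\<in>{1..m}. of_bool (r < j) * Z r x j) = G r" unfolding G_def by (rule sum.cong[OF refl])
      then show ?thesis using True True2 by simp
    next
      case False2: False
      then have "Q (r,x) \<noteq> 0" using Q_zero_iff[OF True] by simp
      then show ?thesis using True False2 unfolding G_def Z_def by auto
    qed
  next
    case False
    have "\<not> (r \<in> JJ \<and> x = int (a r) + 1)"
    proof
      assume h: "r \<in> JJ \<and> x = int (a r) + 1"
      then have "a r < b r" using JJ_ab by simp
      then show False using False h r unfolding F_def by auto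
    qed
    then show ?thesis using False unfolding G_def by auto
  qed
  have "(\<Sum>r\<in>{1..m}. \<Sum>x\<in>XX. of_bool ((r,x) \<in> F) * (\<Sum>j\<in>{1..m}. of_bool (r < j) * Z r x j))
      = (\<Sum>r\<in>{1..m}. \<Sum>x\<in>XX. of_bool (x = int (a r) + 1) * G r)"
    using step by (intro sum.cong) auto
  also have "\<dots> = (\<Sum>r\<in>{1..m}. G r)"
  proof (rule sum.cong[OF refl])
    fix r assume r: "r \<in> {1..m}"
    have "int (a r) + 1 \<in> XX" using ab[OF r] b_le[OF r] unfolding XX_def by auto
    then show "(\<Sum>x\<in>XX. of_bool (x = int (a r) + 1) * G r) = G r"
      using sum_delta_int[OF fX, of "int (a r) + 1" "\<lambda>_. G r"] by simp
  qed
  also have "\<dots> = int (hstat (m-1) JJ a)"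
  proof -
    define H where "H = {(r,s). 1 \<le> r \<and> r < s \<and> s \<le> m-1 \<and> r \<in> JJ \<and> s \<notin> JJ \<and> a s = a r + 1}"
    have "hstat (m-1) JJ a = card H" unfolding hstat_def H_def ..
    moreover have "int (card H) = (\<Sum>r\<in>{1..m}. \<Sum>s\<in>{1..m}. of_bool ((r,s) \<in> H))"
      by (rule card_subset_prod) (auto simp: H_def)
    moreover have "(r,s) \<in> H \<longleftrightarrow> r \<in> JJ \<and> r < s \<and> s \<notin> JJ \<and> a s = a r + 1"
      if "r \<in> {1..m}" "s \<in> {1..m}" for r s
    proof -
      have "a s = a r + 1 \<Longrightarrow> s \<noteq> m" using am by auto
      then show ?thesis using that unfolding H_def by auto
    qed
    ultimately show ?thesis unfolding G_def by (auto intro!: sum.cong)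
  qed
  finally show ?thesis .
qed

definition Up :: "int \<Rightarrow> nat \<Rightarrow> int" where
  "Up x j = of_bool (int (a (j-1)) < x \<and> x \<le> int (b j) - 1)"

lemma restrict_lt:
  fixes f :: "nat \<Rightarrow> int"
  shows "(\<Sum>j\<in>{1..m}. of_bool (r < j) * f j) = (\<Sum>j\<in>{r<..m}. f j)"
proof -
  have "(\<Sum>j\<in>{1..m}. of_bool (r < j) * f j) = (\<Sum>j\<in>{1..m}. if r < j then f j else 0)"
    by (rule sum.cong) auto
  also have "\<dots> = sum f {j\<in>{1..m}. r < j}" by (rule sum.inter_filter[symmetric]) simp
  also have "{j\<in>{1..m}. r < j} = {r<..m}" by auto
  finally show ?thesis .
qed

lemma restrict_lt2:
  fixes f :: "nat \<Rightarrow> int"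
  shows "j \<le> m + 1 \<Longrightarrow> (\<Sum>r\<in>{1..m}. of_bool (r < j) * f r) = (\<Sum>r\<in>{1..<j}. f r)"
proof -
  assume j: "j \<le> m + 1"
  have "(\<Sum>r\<in>{1..m}. of_bool (r < j) * f r) = (\<Sum>r\<in>{1..m}. if r < j then f r else 0)"
    by (rule sum.cong) auto
  also have "\<dots> = sum f {r\<in>{1..m}. r < j}" by (rule sum.inter_filter[symmetric]) simp
  also have "{r\<in>{1..m}. r < j} = {1..<j}" using j by auto
  finally show ?thesis .
qed

lemma Dl_Up: "j \<in> {1..m} \<Longrightarrow> Dl x j - Up x j = of_bool (x \<le> int (a (j-1))) - of_bool (x \<le> int (a j))"
  using a_le[of j] unfolding Dl_def Up_def b_def by auto

lemma T1:
  assumes rx: "(r,x) \<in> F"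
  shows "(\<Sum>j\<in>{1..m}. of_bool (r < j) * Dl x j) = (\<Sum>j\<in>{1..m}. of_bool (r < j) * Up x j)"
proof -
  have r: "r \<in> {1..m}" "int (a r) < x" using rx unfolding F_def by auto
  have "(\<Sum>j\<in>{r<..m}. Dl x j - Up x j) = (\<Sum>j\<in>{r<..m}. of_bool (x \<le> int (a (j-1))) - of_bool (x \<le> int (a j)))"
    by (rule sum.cong) (use Dl_Up in auto)
  also have "\<dots> = of_bool (x \<le> int (a r)) - of_bool (x \<le> int (a m))"
    using telescope_down[of r m "\<lambda>j. of_bool (x \<le> int (a j))"] r by simp
  also have "\<dots> = 0" using r am by simp
  finally have "(\<Sum>j\<in>{r<..m}. Dl x j) = (\<Sum>j\<in>{r<..m}. Up x j)" by (simp add: sum_subtractf)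
  then show ?thesis unfolding restrict_lt .
qed

lemma card_filter_sum: "finite B \<Longrightarrow> int (card {x\<in>B. Pr x}) = (\<Sum>x\<in>B. of_bool (Pr x))"
proof -
  assume B: "finite B"
  have "int (card {x\<in>B. Pr x}) = (\<Sum>x\<in>{x\<in>B. Pr x}. (1::int))" by simp
  also have "\<dots> = (\<Sum>x\<in>B. if Pr x then 1 else 0)" by (rule sum.inter_filter) fact
  also have "\<dots> = (\<Sum>x\<in>B. of_bool (Pr x))" by (rule sum.cong) auto
  finally show ?thesis .
qed

lemma card_as_sum_XX:
  assumes S: "S \<subseteq> {0..N}"
  shows "int (card S) = (\<Sum>x\<in>XX. of_bool (0 < x \<and> nat (x - 1) \<in> S))"
proof -
  have inj: "inj_on (\<lambda>y. int y + 1) S" by (auto simp: inj_on_def)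
  have img: "(\<lambda>y. int y + 1) ` S = {x\<in>XX. 0 < x \<and> nat (x - 1) \<in> S}"
  proof (intro equalityI subsetI)
    fix x assume "x \<in> (\<lambda>y. int y + 1) ` S"
    then obtain y where "y \<in> S" "x = int y + 1" by auto
    then show "x \<in> {x\<in>XX. 0 < x \<and> nat (x - 1) \<in> S}" using S unfolding XX_def by auto
  next
    fix x assume x: "x \<in> {x\<in>XX. 0 < x \<and> nat (x - 1) \<in> S}"
    then have "x = int (nat (x - 1)) + 1" by auto
    then show "x \<in> (\<lambda>y. int y + 1) ` S" using x by blast
  qed
  have "card S = card ((\<lambda>y. int y + 1) ` S)" using card_image[OF inj] by simp
  then show ?thesis unfolding img using card_filter_sum[of XX] unfolding XX_def by simp
qed

lemma T2:
  "(\<Sum>r\<in>{1..m}. \<Sum>x\<in>XX. of_bool ((r,x) \<in> F) * (\<Sum>j\<in>{1..m}. of_bool (r < j) * Up x j))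
     = int (dstat m (\<lambda>j. a (j - 1)) \<tau>)"
proof -
  have fX: "finite XX" unfolding XX_def by simp
  define L1 where "L1 r j = (\<Sum>x\<in>XX. of_bool (int (a r) < x \<and> x \<le> int (b r)) * Up x j)" for r j
  define L2 where "L2 r j = (\<Sum>x\<in>XX. of_bool (int (a (r-1)) < x \<and> x \<le> int (b r)) * Up x j)" for r j
  have A: "(\<Sum>r\<in>{1..m}. \<Sum>x\<in>XX. of_bool ((r,x) \<in> F) * (\<Sum>j\<in>{1..m}. of_bool (r < j) * Up x j))
      = (\<Sum>r\<in>{1..m}. \<Sum>j\<in>{1..m}. of_bool (r < j) * L1 r j)"
  proof (rule sum.cong[OF refl])
    fix r assume r: "r \<in> {1..m}"
    have "(\<Sum>x\<in>XX. of_bool ((r,x) \<in> F) * (\<Sum>j\<in>{1..m}. of_bool (r < j) * Up x j))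
        = (\<Sum>x\<in>XX. \<Sum>j\<in>{1..m}. of_bool (r < j) * (of_bool (int (a r) < x \<and> x \<le> int (b r)) * Up x j))"
      using r by (intro sum.cong refl) (auto simp: F_def sum_distrib_left)
    also have "\<dots> = (\<Sum>j\<in>{1..m}. \<Sum>x\<in>XX. of_bool (r < j) * (of_bool (int (a r) < x \<and> x \<le> int (b r)) * Up x j))"
      by (rule sum.swap)
    also have "\<dots> = (\<Sum>j\<in>{1..m}. of_bool (r < j) * L1 r j)"
      unfolding L1_def by (simp only: sum_distrib_left)
    finally show "(\<Sum>x\<in>XX. of_bool ((r,x) \<in> F) * (\<Sum>j\<in>{1..m}. of_bool (r < j) * Up x j))
        = (\<Sum>j\<in>{1..m}. of_bool (r < j) * L1 r j)" .
  qed
  have B: "int (dstat m (\<lambda>j. a (j - 1)) \<tau>) = (\<Sum>r\<in>{1..m}. \<Sum>j\<in>{1..m}. of_bool (r < j) * L2 r j)"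
  proof -
    have "int (dstat m (\<lambda>j. a (j - 1)) \<tau>) = (\<Sum>r\<in>{1..m}. \<Sum>j\<in>{r<..m}.
        int (card ({a (r-1)..a (r-1) + \<tau> r} \<inter> {a (j-1)..<a (j-1) + \<tau> j})))"
      unfolding dstat_def by simp
    also have "\<dots> = (\<Sum>r\<in>{1..m}. \<Sum>j\<in>{r<..m}. L2 r j)"
    proof (intro sum.cong refl)
      fix r j assume r: "r \<in> {1..m}" and j: "j \<in> {r<..m}"
      have sub: "{a (r-1)..a (r-1) + \<tau> r} \<inter> {a (j-1)..<a (j-1) + \<tau> j} \<subseteq> {0..N}"
        using b_le[OF r] unfolding b_def by auto
      show "int (card ({a (r-1)..a (r-1) + \<tau> r} \<inter> {a (j-1)..<a (j-1) + \<tau> j})) = L2 r j"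
        unfolding card_as_sum_XX[OF sub] L2_def Up_def b_def
      proof (rule sum.cong[OF refl])
        fix x :: int
        show "of_bool (0 < x \<and> nat (x - 1) \<in> {a (r-1)..a (r-1) + \<tau> r} \<inter> {a (j-1)..<a (j-1) + \<tau> j}) =
          (of_bool (int (a (r - 1)) < x \<and> x \<le> int (a (r - 1) + 1 + \<tau> r)) *
           of_bool (int (a (j - 1)) < x \<and> x \<le> int (a (j - 1) + 1 + \<tau> j) - 1) :: int)"
        proof (cases "0 < x")
          case True
          then have "x = int (nat (x-1)) + 1" by simp
          then obtain y where y: "x = int y + 1" by blast
          then show ?thesis by auto
        next
          case False
          then show ?thesis by auto
        qed
      qed
    qed
    also have "\<dots> = (\<Sum>r\<in>{1..m}. \<Sum>j\<in>{1..m}. of_bool (r < j) * L2 r j)"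
      by (simp only: restrict_lt)
    finally show ?thesis .
  qed
  have C: "(\<Sum>r\<in>{1..m}. \<Sum>j\<in>{1..m}. of_bool (r < j) * (L1 r j - L2 r j)) = 0"
  proof -
    define w where "w r x = (of_bool (int (a r) < x) - of_bool (int (a (r-1)) < x) :: int)" for r x
    have "(\<Sum>r\<in>{1..m}. \<Sum>j\<in>{1..m}. of_bool (r < j) * (L1 r j - L2 r j))
        = (\<Sum>r\<in>{1..m}. \<Sum>j\<in>{1..m}. \<Sum>x\<in>XX. of_bool (r < j) * (w r x * Up x j))"
    proof (intro sum.cong refl)
      fix r j assume r: "r \<in> {1..m}"
      have "L1 r j - L2 r j = (\<Sum>x\<in>XX. w r x * Up x j)"
        unfolding L1_def L2_def sum_subtractf[symmetric]
        by (rule sum.cong) (use ab[OF r] a_le[OF r] in \<open>auto simp: w_def b_def\<close>)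
      then show "of_bool (r < j) * (L1 r j - L2 r j) = (\<Sum>x\<in>XX. of_bool (r < j) * (w r x * Up x j))"
        by (simp add: sum_distrib_left)
    qed
    also have "\<dots> = (\<Sum>j\<in>{1..m}. \<Sum>x\<in>XX. \<Sum>r\<in>{1..m}. of_bool (r < j) * (w r x * Up x j))"
      by (subst sum.swap) (rule sum.cong[OF refl], rule sum.swap)
    also have "\<dots> = (\<Sum>j\<in>{1..m}. \<Sum>x\<in>XX. Up x j * (\<Sum>r\<in>{1..<j}. w r x))"
    proof (intro sum.cong refl)
      fix j x assume j: "j \<in> {1..m}"
      have "(\<Sum>r\<in>{1..m}. of_bool (r < j) * (w r x * Up x j)) = (\<Sum>r\<in>{1..<j}. w r x * Up x j)"
        using restrict_lt2[of j "\<lambda>r. w r x * Up x j"] j by simp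
      then show "(\<Sum>r\<in>{1..m}. of_bool (r < j) * (w r x * Up x j)) = Up x j * (\<Sum>r\<in>{1..<j}. w r x)"
        by (simp add: sum_distrib_left mult.commute)
    qed
    also have "\<dots> = 0"
    proof (rule sum.neutral, rule ballI)
      fix j assume j: "j \<in> {1..m}"
      show "(\<Sum>x\<in>XX. Up x j * (\<Sum>r\<in>{1..<j}. w r x)) = 0"
      proof (rule sum.neutral, rule ballI)
        fix x
        have "(\<Sum>r\<in>{1..<j}. w r x) = of_bool (int (a (j-1)) < x) - of_bool (int (a 0) < x)"
          unfolding w_def using telescope_up[of "\<lambda>r. of_bool (int (a r) < x)" j] by simp
        then show "Up x j * (\<Sum>r\<in>{1..<j}. w r x) = 0" using a0 unfolding Up_def by auto
      qed
    qed
    finally show ?thesis .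
  qed
  have "(\<Sum>r\<in>{1..m}. \<Sum>j\<in>{1..m}. of_bool (r < j) * L1 r j) - (\<Sum>r\<in>{1..m}. \<Sum>j\<in>{1..m}. of_bool (r < j) * L2 r j)
      = (\<Sum>r\<in>{1..m}. \<Sum>j\<in>{1..m}. of_bool (r < j) * (L1 r j - L2 r j))"
    by (simp only: sum_subtractf[symmetric] right_diff_distrib)
  then show ?thesis unfolding A B using C by simp
qed

lemma Dl_sum:
  "(\<Sum>r\<in>{1..m}. \<Sum>x\<in>XX. of_bool ((r,x) \<in> F) * (\<Sum>j\<in>{1..m}. of_bool (r < j) * Dl x j))
     = int (dstat m (\<lambda>j. a (j - 1)) \<tau>)"
proof -
  have "(\<Sum>r\<in>{1..m}. \<Sum>x\<in>XX. of_bool ((r,x) \<in> F) * (\<Sum>j\<in>{1..m}. of_bool (r < j) * Dl x j))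
      = (\<Sum>r\<in>{1..m}. \<Sum>x\<in>XX. of_bool ((r,x) \<in> F) * (\<Sum>j\<in>{1..m}. of_bool (r < j) * Up x j))"
  proof (intro sum.cong refl)
    fix r x
    show "of_bool ((r,x) \<in> F) * (\<Sum>j\<in>{1..m}. of_bool (r < j) * Dl x j) =
          of_bool ((r,x) \<in> F) * (\<Sum>j\<in>{1..m}. of_bool (r < j) * Up x j)"
      using T1[of r x] by (cases "(r,x) \<in> F") auto
  qed
  then show ?thesis using T2 by simp
qed

theorem dinv_eq:
  "dinv N ee P = dstat m (\<lambda>j. a (j - 1)) \<tau> + hstat (m-1) JJ a + hw0 m (alphaJ JJ a) (betaT a \<tau>) SS"
  using dinv_split Dl_sum Z_sum by simp

end



lemma finite_weighted:
  assumes B: "finite B"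
  shows "finite {S :: 'x \<Rightarrow> nat. (\<forall>b. b \<notin> B \<longrightarrow> S b = 0) \<and> (\<forall>k\<ge>1. card {b\<in>B. S b = k} = \<mu> k)}"
    (is "finite ?W")
proof (cases "?W = {}")
  case True then show ?thesis by (subst True) simp
next
  case False
  then obtain S0 where S0: "S0 \<in> ?W" by blast
  define V where "V = insert 0 (S0 ` B)"
  have "?W \<subseteq> {f. \<forall>x. (x \<in> B \<longrightarrow> f x \<in> V) \<and> (x \<notin> B \<longrightarrow> f x = 0)}"
  proof (intro subsetI CollectI allI conjI impI)
    fix S x assume S: "S \<in> ?W" and x: "x \<in> B"
    show "S x \<in> V"
    proof (cases "S x = 0")
      case True then show ?thesis unfolding V_def by simp
    next
      case False
      then have "card {b\<in>B. S b = S x} = \<mu> (S x)" using S by auto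
      moreover have "card {b\<in>B. S b = S x} \<noteq> 0" using x B by auto
      ultimately have "card {b\<in>B. S0 b = S x} \<noteq> 0" using S0 False by auto
      then obtain b where "b \<in> B" "S0 b = S x" by (metis (mono_tags, lifting) Collect_empty_eq card.empty)
      then have "S x \<in> S0 ` B" by (metis image_eqI)
      then show ?thesis unfolding V_def by simp
    qed
  next
    fix S x assume "S \<in> ?W" "x \<notin> B" then show "S x = 0" by auto
  qed
  moreover have "finite {f. \<forall>x. (x \<in> B \<longrightarrow> f x \<in> V) \<and> (x \<notin> B \<longrightarrow> f x = 0)}"
    by (rule finite_set_of_finite_funs) (use B in \<open>auto simp: V_def\<close>)
  ultimately show ?thesis by (rule finite_subset)
qed

context ATloc
begin

lemma k_inj: "s \<le> m \<Longrightarrow> s' \<le> m \<Longrightarrow> k s = k s' \<Longrightarrow> s = s'"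
  using k_strict by (metis linorder_neqE_nat less_irrefl)

lemma ee_zero_iff: "i \<in> {1..N} \<Longrightarrow> ee i = 0 \<longleftrightarrow> rw i = m"
  using rw_prop[of i] k_inj[of "rw i" m] km unfolding ee_def by auto

lemma card_phi: "card {i\<in>{1..N}. R i} = card {c\<in>F. R (phi c)}"
proof -
  have "phi ` {c\<in>F. R (phi c)} = {i\<in>{1..N}. R i}"
  proof (intro equalityI subsetI)
    fix i assume "i \<in> phi ` {c\<in>F. R (phi c)}" then show "i \<in> {i\<in>{1..N}. R i}" using phi_range by auto
  next
    fix i assume i: "i \<in> {i\<in>{1..N}. R i}"
    then have "psi i \<in> {c\<in>F. R (phi c)}" using psi_F phi_psi by auto
    then show "i \<in> phi ` {c\<in>F. R (phi c)}" using phi_psi i by (metis (no_types, lifting) image_eqI mem_Collect_eq)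
  qed
  moreover have "inj_on phi {c\<in>F. R (phi c)}"
    using bij_phi unfolding bij_betw_def by (auto intro: inj_on_subset)
  ultimately show ?thesis using card_image by fastforce
qed

lemma boxes_gen: "rs_boxes m (alphaJ J a) (betaT a \<tau>) = {c\<in>F. \<not> (fst c \<in> J \<and> snd c = int (a (fst c)) + 1)}"
  unfolding rs_boxes_def F_def alphaJ_def betaT_def b_def by auto

definition LW :: "nat \<Rightarrow> (nat \<Rightarrow> nat) \<Rightarrow> (nat \<Rightarrow> nat) set" where
  "LW l \<mu> = {P \<in> labellings N l ee. has_wt N P \<mu>}"

definition Js :: "nat \<Rightarrow> nat set set" where
  "Js l = {J. J \<subseteq> {1..m-1} \<and> card J = l \<and> (\<forall>j\<in>{1..m}. alphaJ J a j \<le> betaT a \<tau> j)}"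

definition SSet :: "nat set \<Rightarrow> (nat \<Rightarrow> nat) \<Rightarrow> (nat \<times> int \<Rightarrow> nat) set" where
  "SSet J \<mu> = {S. row_strict m (alphaJ J a) (betaT a \<tau>) S \<and>
      (\<forall>k\<ge>1. card {b\<in>rs_boxes m (alphaJ J a) (betaT a \<tau>). S b = k} = \<mu> k)}"

definition fwdJ :: "(nat \<Rightarrow> nat) \<Rightarrow> nat set" where
  "fwdJ P = {s\<in>{1..m-1}. a s < b s \<and> P (phi (s, int (a s) + 1)) = 0}"

definition fwdS :: "(nat \<Rightarrow> nat) \<Rightarrow> nat \<times> int \<Rightarrow> nat" where
  "fwdS P c = (if c \<in> F then P (phi c) else 0)"

definition bwd :: "(nat \<times> int \<Rightarrow> nat) \<Rightarrow> nat \<Rightarrow> nat" where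
  "bwd S i = (if i \<in> {1..N} then S (psi i) else 0)"

lemma LW_labloc: "P \<in> LW l \<mu> \<Longrightarrow> labloc N m a \<tau> P"
  unfolding LW_def labellings_def
  by unfold_locales auto

lemma fwd_in:
  assumes P: "P \<in> LW l \<mu>"
  shows "fwdJ P \<in> Js l" "fwdS P \<in> SSet (fwdJ P) \<mu>"
proof -
  interpret L: labloc N m a \<tau> P by (rule LW_labloc[OF P])
  have JJ: "L.JJ = fwdJ P" unfolding L.JJ_def fwdJ_def L.Q_def ..
  have SS: "L.SS = fwdS P" unfolding L.SS_def fwdS_def L.Q_def by (rule ext) simp
  have bx: "rs_boxes m (alphaJ (fwdJ P) a) (betaT a \<tau>) = {c\<in>F. P (phi c) \<noteq> 0}"
    using L.boxes_eq unfolding JJ L.Q_def .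
  have zc: "{c\<in>F. P (phi c) = 0} = (\<lambda>s. (s, int (a s) + 1)) ` fwdJ P"
  proof (intro equalityI subsetI)
    fix c assume c: "c \<in> {c\<in>F. P (phi c) = 0}"
    obtain s x where sx: "c = (s,x)" by (cases c)
    then have "s \<in> fwdJ P \<and> x = int (a s) + 1" using L.Q_zero_iff[of s x] c JJ unfolding L.Q_def by auto
    then show "c \<in> (\<lambda>s. (s, int (a s) + 1)) ` fwdJ P" using sx by auto
  next
    fix c assume "c \<in> (\<lambda>s. (s, int (a s) + 1)) ` fwdJ P"
    then obtain s where s: "s \<in> fwdJ P" "c = (s, int (a s) + 1)" by auto
    then have "(s, int (a s) + 1) \<in> F" unfolding fwdJ_def F_def by auto
    then show "c \<in> {c\<in>F. P (phi c) = 0}" using s L.Q_zero_iff JJ unfolding L.Q_def by auto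
  qed
  have "card (fwdJ P) = card {c\<in>F. P (phi c) = 0}"
    unfolding zc by (rule card_image[symmetric]) (auto simp: inj_on_def)
  also have "\<dots> = card {i\<in>{1..N}. P i = 0}" using card_phi[of "\<lambda>i. P i = 0"] by simp
  also have "\<dots> = l" using P unfolding LW_def labellings_def by simp
  finally have cardJ: "card (fwdJ P) = l" .
  have alb: "\<forall>j\<in>{1..m}. alphaJ (fwdJ P) a j \<le> betaT a \<tau> j"
    using ab L.JJ_ab JJ unfolding alphaJ_def betaT_def b_def by fastforce
  show "fwdJ P \<in> Js l" unfolding Js_def using cardJ alb JJ L.JJ_sub by auto
  have rs: "row_strict m (alphaJ (fwdJ P) a) (betaT a \<tau>) (fwdS P)"
    unfolding row_strict_def bx
  proof (intro conjI ballI allI impI)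
    fix c assume "c \<in> {c\<in>F. P (phi c) \<noteq> 0}" then show "1 \<le> fwdS P c" unfolding fwdS_def by auto
  next
    fix c assume "c \<notin> {c\<in>F. P (phi c) \<noteq> 0}" then show "fwdS P c = 0" unfolding fwdS_def by auto
  next
    fix j i assume "(j,i) \<in> {c\<in>F. P (phi c) \<noteq> 0} \<and> (j,i+1) \<in> {c\<in>F. P (phi c) \<noteq> 0}"
    then show "fwdS P (j,i) < fwdS P (j,i+1)" using L.Q_inc[of j i] unfolding fwdS_def L.Q_def by auto
  qed
  have wt: "card {c\<in>rs_boxes m (alphaJ (fwdJ P) a) (betaT a \<tau>). fwdS P c = kk} = \<mu> kk" if "kk \<ge> 1" for kk
  proof -
    have "{c\<in>rs_boxes m (alphaJ (fwdJ P) a) (betaT a \<tau>). fwdS P c = kk} = {c\<in>F. P (phi c) = kk}"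
      unfolding bx fwdS_def using that by auto
    then have "card {c\<in>rs_boxes m (alphaJ (fwdJ P) a) (betaT a \<tau>). fwdS P c = kk} = card {i\<in>{1..N}. P i = kk}"
      using card_phi[of "\<lambda>i. P i = kk"] by simp
    also have "\<dots> = \<mu> kk" using P that unfolding LW_def has_wt_def by auto
    finally show ?thesis .
  qed
  show "fwdS P \<in> SSet (fwdJ P) \<mu>" unfolding SSet_def using rs wt by auto
qed

lemma SSet_facts:
  assumes J: "J \<in> Js l" and S: "S \<in> SSet J \<mu>"
  shows "\<And>c. c \<notin> F \<Longrightarrow> S c = 0"
    and "\<And>c. c \<in> F \<Longrightarrow> S c = 0 \<longleftrightarrow> fst c \<in> J \<and> snd c = int (a (fst c)) + 1"
    and "\<And>s x. (s,x) \<in> F \<Longrightarrow> (s,x+1) \<in> F \<Longrightarrow> S (s,x+1) \<noteq> 0 \<Longrightarrow> S (s,x) < S (s,x+1)"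
    and "\<And>s. s \<in> J \<Longrightarrow> (s, int (a s) + 1) \<in> F"
    and "J \<subseteq> {1..m-1}" "card J = l"
proof -
  have bx: "rs_boxes m (alphaJ J a) (betaT a \<tau>) = {c\<in>F. \<not> (fst c \<in> J \<and> snd c = int (a (fst c)) + 1)}"
    by (rule boxes_gen)
  have rs: "row_strict m (alphaJ J a) (betaT a \<tau>) S" using S unfolding SSet_def by simp
  show Jsub: "J \<subseteq> {1..m-1}" and "card J = l" using J unfolding Js_def by auto
  show "S c = 0" if "c \<notin> F" for c using rs that unfolding row_strict_def bx by (cases c) auto
  show "S c = 0 \<longleftrightarrow> fst c \<in> J \<and> snd c = int (a (fst c)) + 1" if "c \<in> F" for c
  proof
    assume "S c = 0"
    moreover have "c \<in> {c\<in>F. \<not> (fst c \<in> J \<and> snd c = int (a (fst c)) + 1)} \<Longrightarrow> 1 \<le> S c"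
      using rs unfolding row_strict_def bx by blast
    ultimately show "fst c \<in> J \<and> snd c = int (a (fst c)) + 1" using that by auto
  next
    assume "fst c \<in> J \<and> snd c = int (a (fst c)) + 1"
    then have "c \<notin> {c\<in>F. \<not> (fst c \<in> J \<and> snd c = int (a (fst c)) + 1)}" by auto
    then show "S c = 0" using rs unfolding row_strict_def bx by blast
  qed
  show "(s, int (a s) + 1) \<in> F" if "s \<in> J" for s
  proof -
    have "s \<in> {1..m-1}" using that Jsub by auto
    then have s: "s \<in> {1..m}" by auto
    then have "alphaJ J a s \<le> betaT a \<tau> s" using J unfolding Js_def by auto
    then show ?thesis using that s unfolding alphaJ_def betaT_def F_def b_def by auto
  qed
  show "S (s,x) < S (s,x+1)" if "(s,x) \<in> F" "(s,x+1) \<in> F" "S (s,x+1) \<noteq> 0" for s x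
  proof (cases "S (s,x) = 0")
    case True then show ?thesis using that by simp
  next
    case False
    then have "(s,x) \<in> rs_boxes m (alphaJ J a) (betaT a \<tau>)" "(s,x+1) \<in> rs_boxes m (alphaJ J a) (betaT a \<tau>)"
      using rs that unfolding row_strict_def bx by auto
    then show ?thesis using rs unfolding row_strict_def by blast
  qed
qed

lemma bwd_phi: "c \<in> F \<Longrightarrow> bwd S (phi c) = S c"
  unfolding bwd_def using phi_range psi_phi by simp

lemma bwd_in:
  assumes J: "J \<in> Js l" and S: "S \<in> SSet J \<mu>" and m1: "1 \<le> m"
  shows "bwd S \<in> LW l \<mu>"
proof -
  note f = SSet_facts[OF J S]
  have bx: "rs_boxes m (alphaJ J a) (betaT a \<tau>) = {c\<in>F. \<not> (fst c \<in> J \<and> snd c = int (a (fst c)) + 1)}"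
    by (rule boxes_gen)
  have inc: "bwd S i < bwd S (Suc i)" if i: "i \<in> {1..<N}" "ee i = ee (Suc i)" for i
  proof -
    have i1: "i \<in> {1..N}" "Suc i \<in> {1..N}" using i by auto
    have "k (rw i) = k (rw (Suc i))" using i(2) i1 unfolding ee_def by simp
    then have same: "rw (Suc i) = rw i" using k_inj rw_prop[OF i1(1)] rw_prop[OF i1(2)] by auto
    define s where "s = rw i"
    define x where "x = int i - int (k s)"
    have c1: "psi i = (s,x)" unfolding psi_def s_def x_def by simp
    have c2: "psi (Suc i) = (s,x+1)" unfolding psi_def s_def x_def using same by simp
    have F1: "(s,x) \<in> F" using psi_F[OF i1(1)] c1 by simp
    have F2: "(s,x+1) \<in> F" using psi_F[OF i1(2)] c2 by simp
    have nz: "S (s,x+1) \<noteq> 0" using f(2)[OF F2] F1 unfolding F_def by auto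
    have "S (s,x) < S (s,x+1)" by (rule f(3)[OF F1 F2 nz])
    then show ?thesis unfolding bwd_def using i1 c1 c2 by simp
  qed
  have zc: "{c\<in>F. S c = 0} = (\<lambda>s. (s, int (a s) + 1)) ` J"
  proof (intro equalityI subsetI)
    fix c assume "c \<in> {c\<in>F. S c = 0}"
    then show "c \<in> (\<lambda>s. (s, int (a s) + 1)) ` J" using f(2) by (cases c) auto
  next
    fix c assume "c \<in> (\<lambda>s. (s, int (a s) + 1)) ` J"
    then show "c \<in> {c\<in>F. S c = 0}" using f(2) f(4) by auto
  qed
  have "card {i\<in>{1..N}. bwd S i = 0} = card {c\<in>F. bwd S (phi c) = 0}" by (rule card_phi)
  also have "\<dots> = card {c\<in>F. S c = 0}" using bwd_phi by (metis (no_types, lifting))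
  also have "\<dots> = card J" unfolding zc by (rule card_image) (auto simp: inj_on_def)
  finally have c0: "card {i\<in>{1..N}. bwd S i = 0} = l" using f(6) by simp
  have nz: "bwd S i \<noteq> 0" if i: "i \<in> {1..N}" "ee i = 0" for i
  proof -
    have "rw i = m" using ee_zero_iff i by simp
    then have "fst (psi i) \<notin> J" using f(5) m1 unfolding psi_def by auto
    then have "S (psi i) \<noteq> 0" using f(2)[OF psi_F[OF i(1)]] by simp
    then show ?thesis unfolding bwd_def using i by simp
  qed
  have wt: "card {i\<in>{1..N}. bwd S i = kk} = \<mu> kk" if kk: "kk \<ge> 1" for kk
  proof -
    have "card {i\<in>{1..N}. bwd S i = kk} = card {c\<in>F. bwd S (phi c) = kk}" by (rule card_phi)
    also have "{c\<in>F. bwd S (phi c) = kk} = {c\<in>rs_boxes m (alphaJ J a) (betaT a \<tau>). S c = kk}"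
      unfolding bx
    proof (intro equalityI subsetI)
      fix c assume c: "c \<in> {c\<in>F. bwd S (phi c) = kk}"
      then have "c \<in> F" by simp
      then have "S c = kk" using c bwd_phi[of c S] by simp
      then have "\<not> (fst c \<in> J \<and> snd c = int (a (fst c)) + 1)" using f(2)[OF \<open>c \<in> F\<close>] kk by auto
      then show "c \<in> {c\<in>{c\<in>F. \<not> (fst c \<in> J \<and> snd c = int (a (fst c)) + 1)}. S c = kk}"
        using \<open>S c = kk\<close> \<open>c \<in> F\<close> by simp
    next
      fix c assume "c \<in> {c\<in>{c\<in>F. \<not> (fst c \<in> J \<and> snd c = int (a (fst c)) + 1)}. S c = kk}"
      then show "c \<in> {c\<in>F. bwd S (phi c) = kk}" using bwd_phi[of c S] by auto
    qed
    also have "card \<dots> = \<mu> kk" using S kk unfolding SSet_def by auto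
    finally show ?thesis .
  qed
  show ?thesis unfolding LW_def labellings_def has_wt_def
    using inc c0 nz wt by (auto simp: bwd_def)
qed

lemma bwd_fwd: "P \<in> LW l \<mu> \<Longrightarrow> bwd (fwdS P) = P"
proof (rule ext)
  fix i assume P: "P \<in> LW l \<mu>"
  show "bwd (fwdS P) i = P i"
  proof (cases "i \<in> {1..N}")
    case True
    then show ?thesis unfolding bwd_def fwdS_def using psi_F phi_psi by simp
  next
    case False
    then show ?thesis using P unfolding bwd_def LW_def labellings_def by auto
  qed
qed

lemma fwd_bwd:
  assumes J: "J \<in> Js l" and S: "S \<in> SSet J \<mu>"
  shows "fwdS (bwd S) = S" "fwdJ (bwd S) = J"
proof -
  note f = SSet_facts[OF J S]
  show "fwdS (bwd S) = S"
  proof (rule ext)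
    fix c show "fwdS (bwd S) c = S c"
      unfolding fwdS_def using bwd_phi f(1) by auto
  qed
  show "fwdJ (bwd S) = J"
  proof (intro equalityI subsetI)
    fix s assume s: "s \<in> fwdJ (bwd S)"
    then have F1: "(s, int (a s) + 1) \<in> F" unfolding fwdJ_def F_def by auto
    then have "S (s, int (a s) + 1) = 0" using s bwd_phi unfolding fwdJ_def by auto
    then show "s \<in> J" using f(2)[OF F1] by simp
  next
    fix s assume s: "s \<in> J"
    have F1: "(s, int (a s) + 1) \<in> F" using f(4)[OF s] .
    have "S (s, int (a s) + 1) = 0" using f(2)[OF F1] s by simp
    then show "s \<in> fwdJ (bwd S)" using F1 s f(5) bwd_phi[OF F1] unfolding fwdJ_def F_def by auto
  qed
qed

lemma finite_F0: "finite F"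
proof (rule finite_subset[of _ "{1..m} \<times> {0..int N + 1}"])
  show "F \<subseteq> {1..m} \<times> {0..int N + 1}"
  proof
    fix c assume c: "c \<in> F"
    obtain s x where sx: "c = (s,x)" by (cases c)
    have s: "s \<in> {1..m}" "int (a s) < x" "x \<le> int (b s)" using c sx unfolding F_def by auto
    have "b s \<le> N" using b_le[OF s(1)] by simp
    then show "c \<in> {1..m} \<times> {0..int N + 1}" using s sx by auto
  qed
qed simp

lemma finite_Js: "finite (Js l)"
  by (rule finite_subset[of _ "Pow {1..m-1}"]) (auto simp: Js_def)

lemma finite_SSet: "finite (SSet J \<mu>)"
proof -
  have fb: "finite (rs_boxes m (alphaJ J a) (betaT a \<tau>))"
    unfolding boxes_gen by (rule finite_subset[OF _ finite_F0]) auto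
  show ?thesis
    by (rule finite_subset[OF _ finite_weighted[OF fb, of \<mu>]]) (auto simp: SSet_def row_strict_def)
qed

lemma inner_sum:
  fixes q :: "'f::field"
  shows "(\<Sum>P\<in>LW l \<mu>. q ^ dinv N ee P) =
    (\<Sum>J\<in>Js l. q ^ (dstat m (\<lambda>j. a (j - 1)) \<tau> + hstat (m-1) J a) *
        (\<Sum>S\<in>SSet J \<mu>. q ^ hw0 m (alphaJ J a) (betaT a \<tau>) S))"
proof -
  have "(\<Sum>P\<in>LW l \<mu>. q ^ dinv N ee P) =
     (\<Sum>(J,S)\<in>(SIGMA J:Js l. SSet J \<mu>). q ^ (dstat m (\<lambda>j. a (j - 1)) \<tau> + hstat (m-1) J a + hw0 m (alphaJ J a) (betaT a \<tau>) S))"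
  proof (rule sum.reindex_bij_witness[where i = "\<lambda>(J,S). bwd S" and j = "\<lambda>P. (fwdJ P, fwdS P)"])
    fix P assume P: "P \<in> LW l \<mu>"
    show "(case (fwdJ P, fwdS P) of (J, S) \<Rightarrow> bwd S) = P" using bwd_fwd[OF P] by simp
    show "(fwdJ P, fwdS P) \<in> (SIGMA J:Js l. SSet J \<mu>)" using fwd_in[OF P] by simp
    interpret L: labloc N m a \<tau> P by (rule LW_labloc[OF P])
    have JJ: "L.JJ = fwdJ P" unfolding L.JJ_def fwdJ_def L.Q_def ..
    have SS: "L.SS = fwdS P" unfolding L.SS_def fwdS_def L.Q_def by (rule ext) simp
    show "(case (fwdJ P, fwdS P) of (J, S) \<Rightarrow> q ^ (dstat m (\<lambda>j. a (j - 1)) \<tau> + hstat (m-1) J a + hw0 m (alphaJ J a) (betaT a \<tau>) S))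
        = q ^ dinv N ee P"
      using L.dinv_eq unfolding JJ SS by simp
  next
    fix p assume p: "p \<in> (SIGMA J:Js l. SSet J \<mu>)"
    obtain J S where JS: "p = (J,S)" by (cases p)
    have J: "J \<in> Js l" and S: "S \<in> SSet J \<mu>" using p JS by auto
    show "(fwdJ (case p of (J, S) \<Rightarrow> bwd S), fwdS (case p of (J, S) \<Rightarrow> bwd S)) = p"
      using fwd_bwd[OF J S] JS by simp
    show "(case p of (J, S) \<Rightarrow> bwd S) \<in> LW l \<mu>" using bwd_in[OF J S m1] JS by simp
  qed
  also have "\<dots> = (\<Sum>J\<in>Js l. \<Sum>S\<in>SSet J \<mu>. q ^ (dstat m (\<lambda>j. a (j - 1)) \<tau> + hstat (m-1) J a + hw0 m (alphaJ J a) (betaT a \<tau>) S))"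
    by (rule sum.Sigma[symmetric]) (use finite_Js finite_SSet in auto)
  also have "\<dots> = (\<Sum>J\<in>Js l. q ^ (dstat m (\<lambda>j. a (j - 1)) \<tau> + hstat (m-1) J a) *
        (\<Sum>S\<in>SSet J \<mu>. q ^ hw0 m (alphaJ J a) (betaT a \<tau>) S))"
    by (simp add: power_add sum_distrib_left)
  finally show ?thesis .
qed

end



lemma card_filter_nat: "finite B \<Longrightarrow> card {x\<in>B. Pr x} = (\<Sum>x\<in>B. of_bool (Pr x) :: nat)"
proof -
  assume B: "finite B"
  have "card {x\<in>B. Pr x} = (\<Sum>x\<in>{x\<in>B. Pr x}. (1::nat))" by simp
  also have "\<dots> = (\<Sum>x\<in>B. if Pr x then 1 else 0)" by (rule sum.inter_filter) fact
  also have "\<dots> = (\<Sum>x\<in>B. of_bool (Pr x))" by (rule sum.cong) auto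
  finally show ?thesis .
qed

definition EE :: "nat \<Rightarrow> (nat \<Rightarrow> nat) \<Rightarrow> nat \<Rightarrow> nat" where
  "EE N e x = card {i\<in>{1..N}. e i \<le> x}"

lemma dyck_mono: "e \<in> dyck N \<Longrightarrow> 1 \<le> i \<Longrightarrow> i \<le> i' \<Longrightarrow> i' \<le> N \<Longrightarrow> e i \<le> e i'"
proof (induction i' rule: nat_induct)
  case 0 then show ?case by simp
next
  case (Suc n)
  show ?case
  proof (cases "i = Suc n")
    case True then show ?thesis by simp
  next
    case False
    then have "e i \<le> e n" using Suc by simp
    moreover have "e n \<le> e (Suc n)" using Suc False unfolding dyck_def by auto
    ultimately show ?thesis by simp
  qed
qed

lemma dyck_le: "e \<in> dyck N \<Longrightarrow> i \<in> {1..N} \<Longrightarrow> e i \<le> i - 1"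
  unfolding dyck_def by auto

lemma dyck_out: "e \<in> dyck N \<Longrightarrow> i \<notin> {1..N} \<Longrightarrow> e i = 0"
  unfolding dyck_def by auto

lemma EE_set:
  assumes e: "e \<in> dyck N"
  shows "{i\<in>{1..N}. e i \<le> x} = {1..EE N e x}"
proof -
  define M where "M = {i\<in>{1..N}. e i \<le> x}"
  have down: "i \<in> M" if "i' \<in> M" "1 \<le> i" "i \<le> i'" for i i'
    using that dyck_mono[OF e, of i i'] unfolding M_def by auto
  show ?thesis
  proof (cases "M = {}")
    case True then show ?thesis unfolding EE_def M_def[symmetric] by simp
  next
    case False
    have fM: "finite M" unfolding M_def by simp
    define u where "u = Max M"
    have u: "u \<in> M" using Max_in[OF fM False] unfolding u_def .
    have "M = {1..u}"
    proof (intro equalityI subsetI)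
      fix i assume "i \<in> M"
      then show "i \<in> {1..u}" using Max_ge[OF fM] unfolding u_def M_def by auto
    next
      fix i assume "i \<in> {1..u}" then show "i \<in> M" using down[OF u] by auto
    qed
    then show ?thesis unfolding EE_def M_def[symmetric] by simp
  qed
qed

lemma EE_le_N: "EE N e x \<le> N"
  unfolding EE_def by (rule order.trans[OF card_mono[of "{1..N}"]]) auto

lemma EE_mono: "x \<le> y \<Longrightarrow> EE N e x \<le> EE N e y"
  unfolding EE_def by (rule card_mono) auto

lemma EE_ge: assumes e: "e \<in> dyck N" and x: "x < N" shows "x + 1 \<le> EE N e x"
proof -
  have "{1..x+1} \<subseteq> {i\<in>{1..N}. e i \<le> x}" using dyck_le[OF e] x by fastforce
  then have "card {1..x+1} \<le> EE N e x" unfolding EE_def by (intro card_mono) auto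
  then show ?thesis by simp
qed

lemma EE_top: assumes e: "e \<in> dyck N" and x: "N \<le> x + 1" shows "EE N e x = N"
proof -
  have "{i\<in>{1..N}. e i \<le> x} = {1..N}" using dyck_le[OF e] x by fastforce
  then show ?thesis unfolding EE_def by simp
qed

lemma EE_iff: "e \<in> dyck N \<Longrightarrow> i \<in> {1..N} \<Longrightarrow> e i \<le> x \<longleftrightarrow> i \<le> EE N e x"
proof -
  assume e: "e \<in> dyck N" and i: "i \<in> {1..N}"
  have "i \<in> {i\<in>{1..N}. e i \<le> x} \<longleftrightarrow> i \<in> {1..EE N e x}" using EE_set[OF e, of x] by simp
  then show ?thesis using i by auto
qed

lemma colarea_EE:
  assumes e: "e \<in> dyck N" and i: "i \<in> {1..N}"
  shows "colarea N e i = EE N e (N - i) - (N - i) - 1"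
proof -
  have "{j\<in>{1..N}. N + 2 \<le> j + i \<and> e j + i \<le> N} = {j\<in>{1..N}. e j \<le> N - i} - {1..N-i+1}"
    using i by auto
  moreover have "{1..N-i+1} \<subseteq> {j\<in>{1..N}. e j \<le> N - i}"
  proof
    fix j assume j: "j \<in> {1..N-i+1}"
    then have "j \<in> {1..N}" using i by auto
    then have "e j \<le> j - 1" using dyck_le[OF e] by simp
    then show "j \<in> {j\<in>{1..N}. e j \<le> N - i}" using j \<open>j \<in> {1..N}\<close> by auto
  qed
  ultimately have "colarea N e i = card {j\<in>{1..N}. e j \<le> N - i} - card {1..N-i+1}"
    unfolding colarea_def by (simp add: card_Diff_subset)
  then show ?thesis unfolding EE_def by simp
qed

lemma colarea_step:
  assumes e: "e \<in> dyck N" and i: "i \<in> {2..N}"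
  shows "colarea N e i = colarea N e (i-1) + 1 \<longleftrightarrow> EE N e (N - i) = EE N e (N - i + 1)"
proof -
  have c1: "colarea N e i = EE N e (N - i) - (N - i) - 1" using colarea_EE[OF e] i by auto
  have i1: "i - 1 \<in> {1..N}" "N - (i - 1) = N - i + 1" using i by auto
  have c2: "colarea N e (i-1) = EE N e (N - i + 1) - (N - i + 1) - 1"
    using colarea_EE[OF e i1(1)] unfolding i1(2) .
  have g1: "N - i + 1 \<le> EE N e (N - i)" using EE_ge[OF e, of "N-i"] i by auto
  have g2: "N - i + 2 \<le> EE N e (N - i + 1)" using EE_ge[OF e, of "N-i+1"] i by auto
  have mo: "EE N e (N - i) \<le> EE N e (N - i + 1)" by (rule EE_mono) simp
  show ?thesis using c1 c2 g1 g2 mo by linarith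
qed

lemma EE_step_empty:
  assumes e: "e \<in> dyck N" and x: "1 \<le> x"
  shows "EE N e (x - 1) = EE N e x \<longleftrightarrow> (\<forall>i\<in>{1..N}. e i \<noteq> x)"
proof -
  have sub: "{i\<in>{1..N}. e i \<le> x - 1} \<subseteq> {i\<in>{1..N}. e i \<le> x}" by auto
  have "{i\<in>{1..N}. e i \<le> x} - {i\<in>{1..N}. e i \<le> x - 1} = {i\<in>{1..N}. e i = x}" using x by auto
  moreover have "card ({i\<in>{1..N}. e i \<le> x} - {i\<in>{1..N}. e i \<le> x - 1}) =
      card {i\<in>{1..N}. e i \<le> x} - card {i\<in>{1..N}. e i \<le> x - 1}"
    by (rule card_Diff_subset) (use sub in auto)
  ultimately have "EE N e x - EE N e (x-1) = card {i\<in>{1..N}. e i = x}"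
    unfolding EE_def by simp
  moreover have "EE N e (x-1) \<le> EE N e x" by (rule EE_mono) simp
  moreover have "{i\<in>{1..N}. e i = x} = {} \<longleftrightarrow> (\<forall>i\<in>{1..N}. e i \<noteq> x)" by auto
  moreover have "card {i\<in>{1..N}. e i = x} = 0 \<longleftrightarrow> {i\<in>{1..N}. e i = x} = {}" by simp
  ultimately show ?thesis by linarith
qed

lemma area_colarea:
  assumes e: "e \<in> dyck N"
  shows "area N e = (\<Sum>i=1..N. colarea N e i)"
proof -
  have "(\<Sum>i=1..N. colarea N e i) = (\<Sum>i=1..N. \<Sum>j=1..N. of_bool (N + 2 \<le> j + i \<and> e j + i \<le> N))"
    unfolding colarea_def by (intro sum.cong refl card_filter_nat) simp
  also have "\<dots> = (\<Sum>j=1..N. \<Sum>i=1..N. of_bool (N + 2 \<le> j + i \<and> e j + i \<le> N))"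
    by (rule sum.swap)
  also have "\<dots> = (\<Sum>j=1..N. rowarea e j)"
  proof (rule sum.cong[OF refl])
    fix j assume j: "j \<in> {1..N}"
    have "(\<Sum>i=1..N. of_bool (N + 2 \<le> j + i \<and> e j + i \<le> N)) = card {i\<in>{1..N}. N + 2 \<le> j + i \<and> e j + i \<le> N}"
      by (rule card_filter_nat[symmetric]) simp
    also have "{i\<in>{1..N}. N + 2 \<le> j + i \<and> e j + i \<le> N} = {N+2-j..N - e j}"
    proof -
      have "e j \<le> j - 1" using dyck_le[OF e j] .
      then show ?thesis using j by (auto simp: le_diff_conv2)
    qed
    also have "card {N+2-j..N - e j} = rowarea e j"
    proof -
      have "e j \<le> j - 1" using dyck_le[OF e j] .
      moreover have "e j \<le> N" using \<open>e j \<le> j - 1\<close> j by auto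
      ultimately show ?thesis unfolding rowarea_def using j by simp
    qed
    finally show "(\<Sum>i=1..N. of_bool (N + 2 \<le> j + i \<and> e j + i \<le> N)) = rowarea e j" .
  qed
  finally show ?thesis unfolding area_def by simp
qed

lemma finite_dyck: "finite (dyck N)"
proof (rule finite_subset[OF _ finite_set_of_finite_funs[of "{1..N}" "{0..N}" 0]])
  show "dyck N \<subseteq> {f. \<forall>x. (x \<in> {1..N} \<longrightarrow> f x \<in> {0..N}) \<and> (x \<notin> {1..N} \<longrightarrow> f x = 0)}"
  proof
    fix f assume f: "f \<in> dyck N"
    have "f x \<in> {0..N}" if "x \<in> {1..N}" for x using dyck_le[OF f that] that by auto
    moreover have "f x = 0" if "x \<notin> {1..N}" for x using dyck_out[OF f that] .
    ultimately show "f \<in> {f. \<forall>x. (x \<in> {1..N} \<longrightarrow> f x \<in> {0..N}) \<and> (x \<notin> {1..N} \<longrightarrow> f x = 0)}" by auto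
  qed
qed auto



definition Cset :: "nat \<Rightarrow> (nat \<Rightarrow> nat) \<Rightarrow> nat set" where
  "Cset N e = {i\<in>{2..N}. colarea N e i = colarea N e (i - 1) + 1}"

definition Ks :: "nat \<Rightarrow> nat \<Rightarrow> (nat \<Rightarrow> nat) \<Rightarrow> nat set set" where
  "Ks N m e = {K. K \<subseteq> Cset N e \<and> card K = N - m}"

context ATloc
begin

lemma E_ee:
  assumes s: "s \<in> {1..m}" and x: "k s \<le> x" "x < k (s-1)"
  shows "EE N ee x = A (s-1)"
proof -
  have "{i\<in>{1..N}. ee i \<le> x} = {1..A (s-1)}"
  proof (intro equalityI subsetI)
    fix i assume i: "i \<in> {i\<in>{1..N}. ee i \<le> x}"
    then have iN: "i \<in> {1..N}" by simp
    note r = rw_prop[OF iN]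
    show "i \<in> {1..A (s-1)}"
    proof (rule ccontr)
      assume "i \<notin> {1..A (s-1)}"
      then have "A (s-1) < i" using iN by auto
      then have "rw i < s"
      proof -
        assume h: "A (s-1) < i"
        show "rw i < s"
        proof (rule ccontr)
          assume "\<not> rw i < s"
          then have "A (rw i - 1) \<le> A (s-1)" using A_anti[of "s-1" "rw i - 1"] r by auto
          then show False using h r by simp
        qed
      qed
      then have "k (s-1) \<le> k (rw i)" using k_anti[of "rw i" "s-1"] s by auto
      then show False using i x iN unfolding ee_def by auto
    qed
  next
    fix i assume i: "i \<in> {1..A (s-1)}"
    moreover have "s - 1 \<le> m" using s by auto
    ultimately have iN: "i \<in> {1..N}" using A_le_N[of "s-1"] by auto
    note r = rw_prop[OF iN]
    have "s \<le> rw i"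
    proof (rule ccontr)
      assume "\<not> s \<le> rw i"
      then have "A (s-1) \<le> A (rw i)" using A_anti[of "rw i" "s-1"] s by auto
      then show False using i r by simp
    qed
    then have "k (rw i) \<le> k s" using k_anti r by auto
    then show "i \<in> {i\<in>{1..N}. ee i \<le> x}" using iN x unfolding ee_def by auto
  qed
  then show ?thesis unfolding EE_def by simp
qed

lemma ee_line: "i \<in> {1..N} \<Longrightarrow> ee i \<in> k ` {1..m}"
  using rw_prop unfolding ee_def by auto

lemma k_range: "s \<in> {1..m-1} \<Longrightarrow> k s \<in> {1..N-1}"
proof -
  assume s: "s \<in> {1..m-1}"
  then have "s < m" "0 < s" "s \<le> m" using m1 by auto
  then have "1 \<le> k s" "k s < k 0" using k_pos[of s] k_strict[of 0 s] by auto
  then show ?thesis using k0 by auto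
qed

lemma inj_k: "inj_on k {0..m}"
  using k_inj by (auto simp: inj_on_def)

definition Kset :: "nat set" where
  "Kset = {i\<in>{2..N}. N + 1 - i \<notin> k ` {1..m-1}}"

lemma Kset_Cset: "Kset \<subseteq> Cset N ee"
proof
  fix i assume i: "i \<in> Kset"
  then have i2: "i \<in> {2..N}" and nk: "N + 1 - i \<notin> k ` {1..m-1}" unfolding Kset_def by auto
  define x where "x = N + 1 - i"
  have x1: "1 \<le> x" using i2 unfolding x_def by auto
  have emp: "\<forall>j\<in>{1..N}. ee j \<noteq> x"
  proof
    fix j assume j: "j \<in> {1..N}"
    then obtain s where s: "s \<in> {1..m}" "ee j = k s" using ee_line by blast
    show "ee j \<noteq> x"
    proof (cases "s = m")
      case True then show ?thesis using s km x1 by simp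
    next
      case False
      then have "s \<in> {1..m-1}" using s by auto
      then have "k s \<in> k ` {1..m-1}" by blast
      then show ?thesis using s nk unfolding x_def by auto
    qed
  qed
  then have "EE N ee (x - 1) = EE N ee x" using EE_step_empty[OF ee_dyck x1] by simp
  moreover have "x - 1 = N - i" "x = N - i + 1" using i2 unfolding x_def by auto
  ultimately have "EE N ee (N - i) = EE N ee (N - i + 1)" by simp
  then show "i \<in> Cset N ee" unfolding Cset_def using colarea_step[OF ee_dyck i2] i2 by simp
qed

lemma Kset_img: "Kset = (\<lambda>x. N + 1 - x) ` ({1..N-1} - k ` {1..m-1})"
proof (intro equalityI subsetI)
  fix i assume i: "i \<in> Kset"
  then have "N + 1 - i \<in> {1..N-1} - k ` {1..m-1}" "i = N + 1 - (N + 1 - i)" unfolding Kset_def by auto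
  then show "i \<in> (\<lambda>x. N + 1 - x) ` ({1..N-1} - k ` {1..m-1})" by blast
next
  fix i assume "i \<in> (\<lambda>x. N + 1 - x) ` ({1..N-1} - k ` {1..m-1})"
  then obtain x where x: "x \<in> {1..N-1}" "x \<notin> k ` {1..m-1}" "i = N + 1 - x" by auto
  then have "N + 1 - i = x" by auto
  then show "i \<in> Kset" unfolding Kset_def using x by auto
qed

lemma card_Kset: "card Kset = N - m"
proof -
  have inj1: "inj_on (\<lambda>x. N + 1 - x) ({1..N-1} - k ` {1..m-1})" by (auto simp: inj_on_def)
  have sub: "k ` {1..m-1} \<subseteq> {1..N-1}" using k_range by auto
  have ck: "card (k ` {1..m-1}) = m - 1"
  proof -
    have "inj_on k {1..m-1}" by (rule inj_on_subset[OF inj_k]) auto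
    then show ?thesis by (simp add: card_image)
  qed
  have "card Kset = card ({1..N-1} - k ` {1..m-1})" unfolding Kset_img using card_image[OF inj1] .
  also have "\<dots> = (N - 1) - (m - 1)" using card_Diff_subset[OF _ sub] ck by simp
  finally show ?thesis using m1 mN by simp
qed

lemma Kset_Ks: "Kset \<in> Ks N m ee"
  unfolding Ks_def using Kset_Cset card_Kset by simp

lemma compl_Kset: "{1..N} - Kset = (\<lambda>s. N + 1 - k s) ` {0..m-1}"
proof (intro equalityI subsetI)
  fix i assume i: "i \<in> {1..N} - Kset"
  show "i \<in> (\<lambda>s. N + 1 - k s) ` {0..m-1}"
  proof (cases "i = 1")
    case True
    then have "i = N + 1 - k 0" using k0 by simp
    moreover have "(0::nat) \<in> {0..m-1}" by simp
    ultimately show ?thesis by blast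
  next
    case False
    then have "N + 1 - i \<in> k ` {1..m-1}" using i unfolding Kset_def by auto
    then obtain s where s: "s \<in> {1..m-1}" "N + 1 - i = k s" by auto
    then have "i = N + 1 - k s" using i by auto
    then show ?thesis using s by auto
  qed
next
  fix i assume "i \<in> (\<lambda>s. N + 1 - k s) ` {0..m-1}"
  then obtain s where s: "s \<in> {0..m-1}" "i = N + 1 - k s" by auto
  show "i \<in> {1..N} - Kset"
  proof (cases "s = 0")
    case True then show ?thesis using s k0 m1 mN unfolding Kset_def by auto
  next
    case False
    then have s1: "s \<in> {1..m-1}" using s by auto
    then have "k s \<in> {1..N-1}" using k_range by auto
    then have "N + 1 - i = k s" "i \<in> {1..N}" using s by auto
    then show ?thesis using s1 unfolding Kset_def by auto
  qed
qed

lemma colarea_k: "s \<in> {0..m-1} \<Longrightarrow> colarea N ee (N + 1 - k s) = a s"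
proof -
  assume s: "s \<in> {0..m-1}"
  show ?thesis
  proof (cases "s = 0")
    case True
    have "colarea N ee 1 = EE N ee (N - 1) - (N - 1) - 1"
      using colarea_EE[OF ee_dyck, of 1] m1 mN by simp
    also have "EE N ee (N - 1) = N" using EE_top[OF ee_dyck] by simp
    finally show ?thesis using True k0 a0 m1 mN by simp
  next
    case False
    then have s1: "s \<in> {1..m-1}" using s by auto
    have kr: "k s \<in> {1..N-1}" using k_range[OF s1] .
    have e1: "N - (N + 1 - k s) = k s - 1" "N + 1 - k s \<in> {1..N}" using kr by auto
    have "colarea N ee (N + 1 - k s) = EE N ee (k s - 1) - (k s - 1) - 1"
      using colarea_EE[OF ee_dyck e1(2)] unfolding e1(1) .
    also have "EE N ee (k s - 1) = A s"
    proof -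
      have "Suc s \<le> m" using s1 m1 by auto
      then have "k (Suc s) < k s" using k_strict[of s "Suc s"] by simp
      then have "k (Suc s) \<le> k s - 1" by simp
      moreover have "k s - 1 < k (Suc s - 1)" using kr by simp
      ultimately show ?thesis using E_ee[of "Suc s" "k s - 1"] \<open>Suc s \<le> m\<close> by simp
    qed
    finally show ?thesis unfolding A_def using kr by simp
  qed
qed

lemma t_weight:
  fixes t :: "'f::field"
  assumes t: "t \<noteq> 0"
  shows "t ^ area N ee * (\<Prod>i\<in>Kset. inverse (t ^ colarea N ee i)) = t ^ (\<Sum>i=1..m-1. a i)"
proof -
  have KN: "Kset \<subseteq> {1..N}" unfolding Kset_def by auto
  have "area N ee = (\<Sum>i\<in>{1..N}. colarea N ee i)" using area_colarea[OF ee_dyck] by simp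
  also have "\<dots> = (\<Sum>i\<in>Kset. colarea N ee i) + (\<Sum>i\<in>{1..N} - Kset. colarea N ee i)"
    using sum.subset_diff[OF KN, of "colarea N ee"] by (simp add: add.commute)
  finally have ar: "area N ee = (\<Sum>i\<in>Kset. colarea N ee i) + (\<Sum>i\<in>{1..N} - Kset. colarea N ee i)" .
  have inj: "inj_on (\<lambda>s. N + 1 - k s) {0..m-1}"
  proof (rule inj_onI)
    fix s s' assume s: "s \<in> {0..m-1}" "s' \<in> {0..m-1}" "N + 1 - k s = N + 1 - k s'"
    have "k s \<le> N" "k s' \<le> N" using k_le_N by auto
    then have "k s = k s'" using s(3) by simp
    then show "s = s'" using k_inj s by auto
  qed
  have "(\<Sum>i\<in>{1..N} - Kset. colarea N ee i) = (\<Sum>s\<in>{0..m-1}. colarea N ee (N + 1 - k s))"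
    unfolding compl_Kset by (rule sum.reindex[OF inj, unfolded comp_def])
  also have "\<dots> = (\<Sum>s\<in>{0..m-1}. a s)" using colarea_k by simp
  also have "\<dots> = (\<Sum>s=1..m-1. a s)"
    using sum.atLeast_Suc_atMost[of 0 "m-1" a] a0 by simp
  finally have rest: "(\<Sum>i\<in>{1..N} - Kset. colarea N ee i) = (\<Sum>s=1..m-1. a s)" .
  have "(\<Prod>i\<in>Kset. inverse (t ^ colarea N ee i)) = inverse (t ^ (\<Sum>i\<in>Kset. colarea N ee i))"
    using prod_inversef[of "\<lambda>i. t ^ colarea N ee i" Kset] by (simp add: power_sum comp_def)
  then show ?thesis unfolding ar rest power_add using t by simp
qed

end



definition linesK :: "nat \<Rightarrow> nat set \<Rightarrow> nat set" where
  "linesK N K = {x\<in>{0..N-1}. x = 0 \<or> N + 1 - x \<notin> K}"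

definition kf :: "nat \<Rightarrow> nat \<Rightarrow> nat set \<Rightarrow> nat \<Rightarrow> nat" where
  "kf N m K s = (if s = 0 then N else sorted_list_of_set (linesK N K) ! (m - s))"

definition tauF :: "nat \<Rightarrow> nat \<Rightarrow> nat set \<Rightarrow> nat \<Rightarrow> nat" where
  "tauF N m K s = (if s \<in> {1..m} then kf N m K (s-1) - kf N m K s - 1 else 0)"

definition aF :: "nat \<Rightarrow> nat \<Rightarrow> (nat \<Rightarrow> nat) \<Rightarrow> nat set \<Rightarrow> nat \<Rightarrow> nat" where
  "aF N m e K s = (if s \<in> {1..m-1} then EE N e (kf N m K s - 1) - kf N m K s else 0)"

locale EKloc =
  fixes N m :: nat and e :: "nat \<Rightarrow> nat" and K :: "nat set"
  assumes m1: "1 \<le> m" and mN: "m \<le> N" and e: "e \<in> dyck N"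
    and KC: "K \<subseteq> Cset N e" and cK: "card K = N - m"
begin

abbreviation "L \<equiv> linesK N K"
abbreviation "ks \<equiv> sorted_list_of_set (linesK N K)"

lemma K_sub: "K \<subseteq> {2..N}" using KC unfolding Cset_def by auto

lemma finL: "finite L" unfolding linesK_def by simp
lemma L_sub: "L \<subseteq> {0..N-1}" unfolding linesK_def by auto
lemma L0: "0 \<in> L" unfolding linesK_def using m1 mN by auto

lemma L_eq: "L = insert 0 ({1..N-1} - (\<lambda>i. N + 1 - i) ` K)"
proof (intro equalityI subsetI)
  fix x assume x: "x \<in> L"
  show "x \<in> insert 0 ({1..N-1} - (\<lambda>i. N + 1 - i) ` K)"
  proof (cases "x = 0")
    case True then show ?thesis by simp
  next
    case False
    then have x1: "x \<in> {1..N-1}" "N + 1 - x \<notin> K" using x unfolding linesK_def by auto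
    have "x \<notin> (\<lambda>i. N + 1 - i) ` K"
    proof
      assume "x \<in> (\<lambda>i. N + 1 - i) ` K"
      then obtain i where i: "i \<in> K" "x = N + 1 - i" by auto
      then have "i \<in> {2..N}" using K_sub by auto
      then have "N + 1 - x = i" using i by auto
      then show False using x1 i by simp
    qed
    then show ?thesis using x1 by simp
  qed
next
  fix x assume x: "x \<in> insert 0 ({1..N-1} - (\<lambda>i. N + 1 - i) ` K)"
  show "x \<in> L"
  proof (cases "x = 0")
    case True then show ?thesis using L0 by simp
  next
    case False
    then have x1: "x \<in> {1..N-1}" "x \<notin> (\<lambda>i. N + 1 - i) ` K" using x by auto
    have "N + 1 - x \<notin> K"
    proof
      assume "N + 1 - x \<in> K"
      then have "N + 1 - (N + 1 - x) \<in> (\<lambda>i. N + 1 - i) ` K" by blast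
      then show False using x1 by auto
    qed
    then show ?thesis using x1 unfolding linesK_def by auto
  qed
qed

lemma card_L: "card L = m"
proof -
  have inj: "inj_on (\<lambda>i. N + 1 - i) K"
  proof (rule inj_onI)
    fix x y assume "x \<in> K" "y \<in> K" "N + 1 - x = N + 1 - y"
    moreover then have "x \<le> N" "y \<le> N" using K_sub by auto
    ultimately show "x = y" by simp
  qed
  have sub: "(\<lambda>i. N + 1 - i) ` K \<subseteq> {1..N-1}"
  proof
    fix x assume "x \<in> (\<lambda>i. N + 1 - i) ` K"
    then obtain i where "i \<in> K" "x = N + 1 - i" by auto
    moreover then have "i \<in> {2..N}" using K_sub by auto
    ultimately show "x \<in> {1..N-1}" by auto
  qed
  have "card ((\<lambda>i. N + 1 - i) ` K) = N - m" using card_image[OF inj] cK by simp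
  then have "card ({1..N-1} - (\<lambda>i. N + 1 - i) ` K) = (N - 1) - (N - m)"
  proof -
    have fK: "finite K" using K_sub finite_subset by blast
    show ?thesis using card_Diff_subset[OF finite_imageI[OF fK] sub] \<open>card ((\<lambda>i. N + 1 - i) ` K) = N - m\<close> by simp
  qed
  then show ?thesis unfolding L_eq using m1 mN by simp
qed

lemma ks_len: "length ks = m" using card_L finL by simp
lemma ks_set: "set ks = L" using finL by simp
lemma ks_sorted: "sorted_wrt (<) ks" by simp

lemma ks_less: "i < j \<Longrightarrow> j < m \<Longrightarrow> ks ! i < ks ! j"
  using sorted_wrt_nth_less[OF ks_sorted] ks_len by simp

lemma ks_in: "i < m \<Longrightarrow> ks ! i \<in> L"
  using ks_set ks_len nth_mem by metis

lemma kf_in: "s \<in> {1..m} \<Longrightarrow> kf N m K s \<in> L"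
  unfolding kf_def using ks_in by auto

lemma kf_lt_N: "s \<in> {1..m} \<Longrightarrow> kf N m K s < N"
  using kf_in L_sub m1 mN by fastforce

lemma kf0: "kf N m K 0 = N" unfolding kf_def by simp

lemma kf_strict: "s < s' \<Longrightarrow> s' \<le> m \<Longrightarrow> kf N m K s' < kf N m K s"
proof -
  assume ss: "s < s'" "s' \<le> m"
  show ?thesis
  proof (cases "s = 0")
    case True then show ?thesis using kf_lt_N[of s'] ss kf0 by auto
  next
    case False
    then show ?thesis unfolding kf_def using ks_less[of "m - s'" "m - s"] ss by auto
  qed
qed

lemma kfm: "kf N m K m = 0"
proof -
  have "ks ! 0 \<le> 0"
  proof -
    obtain p where p: "p < m" "ks ! p = 0" using L0 ks_set ks_len in_set_conv_nth by metis
    show ?thesis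
    proof (cases "p = 0")
      case True then show ?thesis using p by simp
    next
      case False then show ?thesis using ks_less[of 0 p] p by simp
    qed
  qed
  then show ?thesis unfolding kf_def using m1 by simp
qed

lemma L_kf: "x \<in> L \<Longrightarrow> \<exists>s\<in>{1..m}. kf N m K s = x"
proof -
  assume "x \<in> L"
  then obtain p where p: "p < m" "ks ! p = x" using ks_set ks_len in_set_conv_nth by metis
  then have "kf N m K (m - p) = x" unfolding kf_def by auto
  then show ?thesis using p by (intro bexI[of _ "m - p"]) auto
qed

lemma between_notin:
  assumes s: "s \<in> {1..m}" and x: "kf N m K s < x" "x < kf N m K (s-1)"
  shows "x \<notin> L"
proof
  assume "x \<in> L"
  then obtain s' where s': "s' \<in> {1..m}" "kf N m K s' = x" using L_kf by blast
  have "s' < s"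
  proof (rule ccontr)
    assume "\<not> s' < s"
    then have "kf N m K s' \<le> kf N m K s" using kf_strict[of s s'] s' by (cases "s = s'") auto
    then show False using s' x by simp
  qed
  moreover have "s - 1 < s'"
  proof (rule ccontr)
    assume "\<not> s - 1 < s'"
    then have "s' \<le> s - 1" "s - 1 \<le> m" using s by auto
    then have "kf N m K (s-1) \<le> kf N m K s'" using kf_strict[of s' "s-1"] by (cases "s' = s - 1") auto
    then show False using s' x by simp
  qed
  ultimately show False by simp
qed

lemma between_step:
  assumes s: "s \<in> {1..m}" and x: "kf N m K s < x" "x < kf N m K (s-1)"
  shows "EE N e (x - 1) = EE N e x"
proof -
  have xL: "x \<notin> L" using between_notin[OF s x] .
  have "kf N m K (s-1) \<le> N"
  proof (cases "s = 1")
    case True then show ?thesis using kf0 by simp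
  next
    case False
    then have "s - 1 \<in> {1..m}" using s by auto
    then show ?thesis using kf_lt_N[of "s-1"] by simp
  qed
  then have xr: "x \<in> {1..N-1}" using x by auto
  then have "N + 1 - x \<in> K" using xL unfolding linesK_def by auto
  then have i: "N + 1 - x \<in> Cset N e" using KC by auto
  have i2: "N + 1 - x \<in> {2..N}" using xr by auto
  have "EE N e (N - (N + 1 - x)) = EE N e (N - (N + 1 - x) + 1)"
    using colarea_step[OF e i2] i unfolding Cset_def by simp
  moreover have "N - (N + 1 - x) = x - 1" "N - (N + 1 - x) + 1 = x" using xr by auto
  ultimately show ?thesis by simp
qed

lemma EE_const:
  assumes s: "s \<in> {1..m}"
  shows "EE N e (kf N m K (s-1) - 1) = EE N e (kf N m K s)"
proof -
  have lt: "kf N m K s < kf N m K (s-1)" using kf_strict[of "s-1" s] s by auto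
  have "EE N e (kf N m K s + d) = EE N e (kf N m K s)" if "kf N m K s + d < kf N m K (s-1)" for d
    using that
  proof (induction d)
    case 0 then show ?case by simp
  next
    case (Suc d)
    then have "EE N e (kf N m K s + Suc d - 1) = EE N e (kf N m K s + Suc d)"
      using between_step[OF s, of "kf N m K s + Suc d"] by simp
    then show ?case using Suc by simp
  qed
  from this[of "kf N m K (s-1) - 1 - kf N m K s"] show ?thesis using lt by simp
qed

end



lemma nat_arith_aux: "(k'::nat) \<le> Y \<Longrightarrow> kj < k' \<Longrightarrow> Y - k' + 1 + (k' - kj - 1) = Y - kj"
  by arith

context EKloc
begin

lemma kf_pos: "s < m \<Longrightarrow> 1 \<le> kf N m K s"
  using kf_strict[of s m] kfm by simp

lemma tau_sum_aux: "n \<le> m \<Longrightarrow> (\<Sum>s=1..n. tauF N m K s) + n + kf N m K n = N"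
proof (induction n)
  case 0 then show ?case using kf0 by simp
next
  case (Suc n)
  have lt: "kf N m K (Suc n) < kf N m K n" using kf_strict[of n "Suc n"] Suc by simp
  have "tauF N m K (Suc n) = kf N m K n - kf N m K (Suc n) - 1" unfolding tauF_def using Suc by simp
  then show ?case using Suc lt by simp
qed

lemma tau_sum: "(\<Sum>s=1..m. tauF N m K s) = N - m"
  using tau_sum_aux[of m] kfm by simp

lemma EE_kf_ge: "s < m \<Longrightarrow> kf N m K s \<le> EE N e (kf N m K s - 1)"
proof -
  assume s: "s < m"
  have "1 \<le> kf N m K s" using kf_pos[OF s] .
  moreover have "kf N m K s \<le> N"
  proof (cases "s = 0")
    case True then show ?thesis using kf0 by simp
  next
    case False then show ?thesis using kf_lt_N[of s] s by simp
  qed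
  ultimately show ?thesis using EE_ge[OF e, of "kf N m K s - 1"] by simp
qed

lemma a_le_F: "j \<in> {1..m} \<Longrightarrow> aF N m e K j \<le> aF N m e K (j-1) + 1 + tauF N m K j"
proof -
  assume j: "j \<in> {1..m}"
  show ?thesis
  proof (cases "j = m")
    case True
    then have "j \<notin> {1..m-1}" using m1 by auto
    then show ?thesis unfolding aF_def if_not_P[OF \<open>j \<notin> {1..m-1}\<close>] by simp
  next
    case False
    then have j1: "j \<in> {1..m-1}" using j by auto
    have lt: "kf N m K j < kf N m K (j-1)" using kf_strict[of "j-1" j] j by auto
    have tj: "tauF N m K j = kf N m K (j-1) - kf N m K j - 1" unfolding tauF_def using j by simp
    have aj: "aF N m e K j = EE N e (kf N m K j - 1) - kf N m K j" unfolding aF_def using j1 by simp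
    show ?thesis
    proof (cases "j = 1")
      case True
      have "aF N m e K 0 = 0" unfolding aF_def by simp
      moreover have "EE N e (kf N m K j - 1) \<le> N" by (rule EE_le_N)
      ultimately show ?thesis using aj tj lt True kf0 by simp
    next
      case False
      then have j2: "j - 1 \<in> {1..m-1}" using j1 by auto
      have aj1: "aF N m e K (j-1) = EE N e (kf N m K (j-1) - 1) - kf N m K (j-1)" unfolding aF_def using j2 by simp
      have g: "kf N m K (j-1) \<le> EE N e (kf N m K (j-1) - 1)" using EE_kf_ge[of "j-1"] j2 by auto
      have mo: "EE N e (kf N m K j - 1) \<le> EE N e (kf N m K (j-1) - 1)" by (rule EE_mono) (use lt in simp)
      have eq: "EE N e (kf N m K (j-1) - 1) - kf N m K (j-1) + 1 + (kf N m K (j-1) - kf N m K j - 1)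
          = EE N e (kf N m K (j-1) - 1) - kf N m K j" using nat_arith_aux[OF g lt] .
      have "EE N e (kf N m K j - 1) - kf N m K j \<le> EE N e (kf N m K (j-1) - 1) - kf N m K j"
        using mo by (rule diff_le_mono)
      then show ?thesis unfolding aj aj1 tj eq .
    qed
  qed
qed

lemma Phi_AT: "ATloc N m (aF N m e K) (tauF N m K)"
  by unfold_locales (use m1 mN tau_sum a_le_F in \<open>auto simp: aF_def tauF_def\<close>)

end

sublocale EKloc \<subseteq> Ph: ATloc N m "aF N m e K" "tauF N m K"
  by (rule Phi_AT)

context EKloc
begin

lemma Ph_k: "s \<le> m \<Longrightarrow> Ph.k s = kf N m K s"
proof (induction s)
  case 0 then show ?case using Ph.k0 kf0 by simp
next
  case (Suc s)
  have "Ph.k s = Ph.k (Suc s) + 1 + tauF N m K (Suc s)" using Ph.k_step[of "Suc s"] Suc by simp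
  moreover have "tauF N m K (Suc s) = kf N m K s - kf N m K (Suc s) - 1" unfolding tauF_def using Suc by simp
  moreover have "kf N m K (Suc s) < kf N m K s" using kf_strict[of s "Suc s"] Suc by simp
  ultimately show ?case using Suc by simp
qed

lemma Ph_A_prev: "s \<in> {1..m} \<Longrightarrow> Ph.A (s-1) = EE N e (kf N m K s)"
proof -
  assume s: "s \<in> {1..m}"
  have c: "EE N e (kf N m K (s-1) - 1) = EE N e (kf N m K s)" using EE_const[OF s] .
  show ?thesis
  proof (cases "s = 1")
    case True
    have "EE N e (N - 1) = N" using EE_top[OF e] by simp
    then show ?thesis using True c Ph.A0 kf0 by simp
  next
    case False
    then have s1: "s - 1 \<in> {1..m-1}" using s by auto
    have "s - 1 \<le> m" using s by auto
    then have "Ph.A (s-1) = EE N e (kf N m K (s-1) - 1) - kf N m K (s-1) + kf N m K (s-1)"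
      unfolding Ph.A_def aF_def using s1 Ph_k[of "s-1"] by simp
    also have "\<dots> = EE N e (kf N m K (s-1) - 1)" using EE_kf_ge[of "s-1"] s1 by auto
    finally show ?thesis using c by simp
  qed
qed

lemma Ph_A: "s \<in> {1..m-1} \<Longrightarrow> Ph.A s = EE N e (kf N m K s - 1)"
proof -
  assume s: "s \<in> {1..m-1}"
  have "s \<le> m" using s by auto
  then have "Ph.A s = EE N e (kf N m K s - 1) - kf N m K s + kf N m K s"
    unfolding Ph.A_def aF_def using s Ph_k[of s] by simp
  also have "\<dots> = EE N e (kf N m K s - 1)" using EE_kf_ge[of s] s by auto
  finally show ?thesis .
qed

lemma Ph_ee: "Ph.ee = e"
proof (rule ext)
  fix i
  show "Ph.ee i = e i"
  proof (cases "i \<in> {1..N}")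
    case False then show ?thesis unfolding Ph.ee_def using dyck_out[OF e False] False by auto
  next
    case True
    define s where "s = Ph.rw i"
    have r: "s \<in> {1..m}" "Ph.A s < i" "i \<le> Ph.A (s-1)" using Ph.rw_prop[OF True] unfolding s_def by auto
    have ee: "Ph.ee i = kf N m K s" unfolding Ph.ee_def s_def[symmetric] using True Ph_k r by simp
    have le: "e i \<le> kf N m K s" using EE_iff[OF e True] r(3) Ph_A_prev[OF r(1)] by simp
    show ?thesis
    proof (cases "s = m")
      case True2: True
      then show ?thesis using ee le kfm by simp
    next
      case False
      then have s1: "s \<in> {1..m-1}" using r by auto
      then have "\<not> e i \<le> kf N m K s - 1" using EE_iff[OF e True] r(2) Ph_A[OF s1] by simp
      then show ?thesis using ee le by simp
    qed
  qed
qed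

lemma Ph_Kset: "Ph.Kset = K"
proof -
  have img: "Ph.k ` {1..m-1} = kf N m K ` {1..m-1}"
    by (rule image_cong[OF refl]) (rule Ph_k, auto)
  have key: "N + 1 - i \<in> kf N m K ` {1..m-1} \<longleftrightarrow> i \<notin> K" if i: "i \<in> {2..N}" for i
  proof -
    define x where "x = N + 1 - i"
    have x: "x \<in> {1..N-1}" "N + 1 - x = i" using i unfolding x_def by auto
    have "x \<in> L \<longleftrightarrow> i \<notin> K" unfolding linesK_def using x by auto
    moreover have "x \<in> L \<longleftrightarrow> x \<in> kf N m K ` {1..m-1}"
    proof
      assume "x \<in> L"
      then obtain s where s: "s \<in> {1..m}" "kf N m K s = x" using L_kf by blast
      then have "s \<noteq> m" using kfm x by auto
      then show "x \<in> kf N m K ` {1..m-1}" using s by auto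
    next
      assume "x \<in> kf N m K ` {1..m-1}"
      then show "x \<in> L" using kf_in by auto
    qed
    ultimately show ?thesis unfolding x_def by simp
  qed
  show ?thesis unfolding Ph.Kset_def img
  proof (intro equalityI subsetI)
    fix i assume "i \<in> {i \<in> {2..N}. N + 1 - i \<notin> kf N m K ` {1..m-1}}"
    then show "i \<in> K" using key by blast
  next
    fix i assume i: "i \<in> K"
    then have "i \<in> {2..N}" using K_sub by auto
    then show "i \<in> {i \<in> {2..N}. N + 1 - i \<notin> kf N m K ` {1..m-1}}" using key i by blast
  qed
qed

end

context ATloc
begin

lemma linesK_Kset: "linesK N Kset = k ` {1..m}"
proof (intro equalityI subsetI)
  fix x assume x: "x \<in> linesK N Kset"
  show "x \<in> k ` {1..m}"
  proof (cases "x = 0")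
    case True then show ?thesis using km m1 by (auto intro: image_eqI[of _ _ m])
  next
    case False
    then have x1: "x \<in> {1..N-1}" "N + 1 - x \<notin> Kset" using x unfolding linesK_def by auto
    then have "N + 1 - (N + 1 - x) \<in> k ` {1..m-1}" unfolding Kset_def by auto
    then show ?thesis using x1 by auto
  qed
next
  fix x assume "x \<in> k ` {1..m}"
  then obtain s where s: "s \<in> {1..m}" "x = k s" by auto
  show "x \<in> linesK N Kset"
  proof (cases "s = m")
    case True then show ?thesis using s km m1 mN unfolding linesK_def by auto
  next
    case False
    then have s1: "s \<in> {1..m-1}" using s by auto
    then have kr: "k s \<in> {1..N-1}" using k_range by simp
    then have "N + 1 - (N + 1 - k s) = k s" by auto
    then have "N + 1 - k s \<notin> Kset" unfolding Kset_def using s1 by auto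
    then show ?thesis using kr s unfolding linesK_def by auto
  qed
qed

lemma sorted_k: "sorted_list_of_set (k ` {1..m}) = map (\<lambda>j. k (m - j)) [0..<m]"
proof -
  have "card (k ` {1..m}) = m"
    by (subst card_image) (auto intro: inj_on_subset[OF inj_k])
  moreover have "sorted_wrt (<) (map (\<lambda>j. k (m - j)) [0..<m])"
    unfolding sorted_wrt_iff_nth_less by (auto intro!: k_strict)
  moreover have "set (map (\<lambda>j. k (m - j)) [0..<m]) = k ` {1..m}"
  proof (intro equalityI subsetI)
    fix x assume "x \<in> set (map (\<lambda>j. k (m - j)) [0..<m])"
    then obtain j where "j < m" "x = k (m - j)" by auto
    then show "x \<in> k ` {1..m}" by auto
  next
    fix x assume "x \<in> k ` {1..m}"
    then obtain s where s: "s \<in> {1..m}" "x = k s" by auto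
    then have "x = k (m - (m - s))" "m - s < m" by auto
    then show "x \<in> set (map (\<lambda>j. k (m - j)) [0..<m])" by auto
  qed
  ultimately show ?thesis
    by (subst sorted_list_of_set_unique[symmetric]) auto
qed

lemma kf_Kset: "s \<le> m \<Longrightarrow> kf N m Kset s = k s"
  unfolding kf_def linesK_Kset sorted_k using k0 by auto

lemma tauF_Kset: "tauF N m Kset = \<tau>"
proof (rule ext)
  fix s show "tauF N m Kset s = \<tau> s"
    unfolding tauF_def using kf_Kset k_step t_out by auto
qed

lemma aF_Kset: "aF N m ee Kset = a"
proof (rule ext)
  fix s
  show "aF N m ee Kset s = a s"
  proof (cases "s \<in> {1..m-1}")
    case False
    then have "aF N m ee Kset s = 0" unfolding aF_def if_not_P[OF False] by simp
    then show ?thesis using a_out[OF False] by simp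
  next
    case True
    have kr: "k s \<in> {1..N-1}" using k_range[OF True] .
    have "Suc s \<le> m" using True m1 by auto
    then have "k (Suc s) < k s" using k_strict[of s "Suc s"] by simp
    then have "EE N ee (k s - 1) = A s" using E_ee[of "Suc s" "k s - 1"] \<open>Suc s \<le> m\<close> kr by simp
    moreover have "s \<le> m" using True by auto
    then have "kf N m Kset s = k s" using kf_Kset[of s] by simp
    ultimately show ?thesis unfolding aF_def A_def using True by simp
  qed
qed

end



lemma finite_Cset: "finite (Cset N e)" unfolding Cset_def by simp

lemma finite_Ks: "finite (Ks N m e)"
  unfolding Ks_def by (rule finite_subset[of _ "Pow (Cset N e)"]) (use finite_Cset in auto)

lemma lhs_expand:
  fixes q t :: "'a::field"
  shows "coeff (lhs_poly N l \<mu> q t) d =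
    (\<Sum>e\<in>dyck N. \<Sum>K\<in>{K. K \<subseteq> Cset N e \<and> card K = d}.
        (t ^ area N e * (\<Prod>i\<in>K. inverse (t ^ colarea N e i))) *
        (\<Sum>P\<in>{P\<in>labellings N l e. has_wt N P \<mu>}. q ^ dinv N e P))"
proof -
  have "coeff (lhs_poly N l \<mu> q t) d =
    (\<Sum>e\<in>dyck N. \<Sum>P\<in>{P\<in>labellings N l e. has_wt N P \<mu>}.
        (t ^ area N e * q ^ dinv N e P) * (\<Sum>K\<in>{K. K \<subseteq> Cset N e \<and> card K = d}. \<Prod>i\<in>K. inverse (t ^ colarea N e i)))"
    unfolding lhs_poly_def coeff_sum coeff_smult Cset_def[symmetric]
    by (simp add: coeff_prod_lin[OF finite_Cset])
  also have "\<dots> = (\<Sum>e\<in>dyck N. \<Sum>K\<in>{K. K \<subseteq> Cset N e \<and> card K = d}.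
        (t ^ area N e * (\<Prod>i\<in>K. inverse (t ^ colarea N e i))) *
        (\<Sum>P\<in>{P\<in>labellings N l e. has_wt N P \<mu>}. q ^ dinv N e P))"
  proof (rule sum.cong[OF refl])
    fix e
    show "(\<Sum>P\<in>{P\<in>labellings N l e. has_wt N P \<mu>}.
        (t ^ area N e * q ^ dinv N e P) * (\<Sum>K\<in>{K. K \<subseteq> Cset N e \<and> card K = d}. \<Prod>i\<in>K. inverse (t ^ colarea N e i))) =
      (\<Sum>K\<in>{K. K \<subseteq> Cset N e \<and> card K = d}.
        (t ^ area N e * (\<Prod>i\<in>K. inverse (t ^ colarea N e i))) *
        (\<Sum>P\<in>{P\<in>labellings N l e. has_wt N P \<mu>}. q ^ dinv N e P))"
      by (simp add: sum_distrib_left sum_distrib_right mult_ac, subst sum.swap, simp)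
  qed
  finally show ?thesis .
qed

definition ATs :: "nat \<Rightarrow> nat \<Rightarrow> ((nat \<Rightarrow> nat) \<times> (nat \<Rightarrow> nat)) set" where
  "ATs N m = {(a,\<tau>). ATloc N m a \<tau>}"

lemma Psi_Phi:
  assumes "(e,K) \<in> Sigma (dyck N) (Ks N m)" "1 \<le> m" "m \<le> N"
  shows "ATloc N m (aF N m e K) (tauF N m K)"
    "ATloc.ee N m (aF N m e K) (tauF N m K) = e"
    "ATloc.Kset N m (tauF N m K) = K"
proof -
  interpret EK: EKloc N m e K
    by unfold_locales (use assms in \<open>auto simp: Ks_def\<close>)
  show "ATloc N m (aF N m e K) (tauF N m K)" by (rule EK.Phi_AT)
  show "ATloc.ee N m (aF N m e K) (tauF N m K) = e" by (rule EK.Ph_ee)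
  show "ATloc.Kset N m (tauF N m K) = K" by (rule EK.Ph_Kset)
qed

lemma reindex_outer:
  fixes f :: "(nat \<Rightarrow> nat) \<Rightarrow> nat set \<Rightarrow> 'b::comm_monoid_add"
  assumes m: "1 \<le> m" "m \<le> N"
  shows "(\<Sum>(e,K)\<in>Sigma (dyck N) (Ks N m). f e K) =
         (\<Sum>(a,\<tau>)\<in>ATs N m. f (ATloc.ee N m a \<tau>) (ATloc.Kset N m \<tau>))"
proof (rule sum.reindex_bij_witness[where i = "\<lambda>(a,\<tau>). (ATloc.ee N m a \<tau>, ATloc.Kset N m \<tau>)"
                                     and j = "\<lambda>(e,K). (aF N m e K, tauF N m K)"])
  fix p assume p: "p \<in> Sigma (dyck N) (Ks N m)"
  obtain e K where eK: "p = (e,K)" by (cases p)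
  note X = Psi_Phi[OF p[unfolded eK] m]
  show "(case case p of (e, K) \<Rightarrow> (aF N m e K, tauF N m K) of (a, \<tau>) \<Rightarrow> (ATloc.ee N m a \<tau>, ATloc.Kset N m \<tau>)) = p"
    using X eK by simp
  show "(case p of (e, K) \<Rightarrow> (aF N m e K, tauF N m K)) \<in> ATs N m" using X eK unfolding ATs_def by simp
  show "(case case p of (e, K) \<Rightarrow> (aF N m e K, tauF N m K) of (a, \<tau>) \<Rightarrow> f (ATloc.ee N m a \<tau>) (ATloc.Kset N m \<tau>)) =
        (case p of (e, K) \<Rightarrow> f e K)" using X eK by simp
next
  fix p assume p: "p \<in> ATs N m"
  obtain a \<tau> where at: "p = (a,\<tau>)" by (cases p)
  interpret A: ATloc N m a \<tau> using p at unfolding ATs_def by simp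
  show "(case case p of (a, \<tau>) \<Rightarrow> (ATloc.ee N m a \<tau>, ATloc.Kset N m \<tau>) of (e, K) \<Rightarrow> (aF N m e K, tauF N m K)) = p"
    using at A.aF_Kset A.tauF_Kset by simp
  show "(case p of (a, \<tau>) \<Rightarrow> (ATloc.ee N m a \<tau>, ATloc.Kset N m \<tau>)) \<in> Sigma (dyck N) (Ks N m)"
    using at A.ee_dyck A.Kset_Ks by simp
qed

lemma finite_ATs: assumes m: "1 \<le> m" "m \<le> N" shows "finite (ATs N m)"
proof -
  have "ATs N m \<subseteq> (\<lambda>(e,K). (aF N m e K, tauF N m K)) ` Sigma (dyck N) (Ks N m)"
  proof
    fix p assume p: "p \<in> ATs N m"
    obtain a \<tau> where at: "p = (a,\<tau>)" by (cases p)
    interpret A: ATloc N m a \<tau> using p at unfolding ATs_def by simp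
    have "(A.ee, A.Kset) \<in> Sigma (dyck N) (Ks N m)" using A.ee_dyck A.Kset_Ks by simp
    moreover have "p = (\<lambda>(e,K). (aF N m e K, tauF N m K)) (A.ee, A.Kset)"
      using at A.aF_Kset A.tauF_Kset by simp
    ultimately show "p \<in> (\<lambda>(e,K). (aF N m e K, tauF N m K)) ` Sigma (dyck N) (Ks N m)" by blast
  qed
  moreover have "finite (Sigma (dyck N) (Ks N m))"
    using finite_dyck finite_Ks by (intro finite_SigmaI) auto
  ultimately show ?thesis using finite_subset by blast
qed

lemma rhs_index_iff:
  assumes m: "1 \<le> m" "m \<le> N"
  shows "(J,a,\<tau>) \<in> rhs_index N m l \<longleftrightarrow> (a,\<tau>) \<in> ATs N m \<and> J \<in> ATloc.Js m a \<tau> l"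
proof
  assume h: "(J,a,\<tau>) \<in> rhs_index N m l"
  have le: "a j \<le> a (j-1) + 1 + \<tau> j" if "j \<in> {1..m}" for j
    using h that unfolding rhs_index_def alphaJ_def betaT_def by fastforce
  have at: "ATloc N m a \<tau>"
    using h le m unfolding rhs_index_def ATloc_def by auto
  show "(a,\<tau>) \<in> ATs N m \<and> J \<in> ATloc.Js m a \<tau> l"
    using h at unfolding rhs_index_def ATs_def ATloc.Js_def[OF at] by auto
next
  assume h: "(a,\<tau>) \<in> ATs N m \<and> J \<in> ATloc.Js m a \<tau> l"
  then have at: "ATloc N m a \<tau>" unfolding ATs_def by simp
  then show "(J,a,\<tau>) \<in> rhs_index N m l"
    using h unfolding rhs_index_def ATloc_def ATloc.Js_def[OF at] by auto
qed

theorem theorem5p1p1: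
  fixes N m l :: nat and \<mu> :: "nat \<Rightarrow> nat" and q t :: "'a::field"
  assumes "l < m" and "m \<le> N" and "t \<noteq> 0"
  shows "coeff (lhs_poly N l \<mu> q t) (N - m) =
    (\<Sum>(J,a,\<tau>)\<in>rhs_index N m l.
        t ^ (\<Sum>i=1..m-1. a i) * q ^ (dstat m (\<lambda>j. a (j - 1)) \<tau> + hstat (m-1) J a)
        * Ncoef m (alphaJ J a) (betaT a \<tau>) \<mu> q)"
proof -
  have m1: "1 \<le> m" using assms(1) by simp
  have mN: "m \<le> N" by (rule assms(2))
  define f where "f e K = (t ^ area N e * (\<Prod>i\<in>K. inverse (t ^ colarea N e i))) *
        (\<Sum>P\<in>{P\<in>labellings N l e. has_wt N P \<mu>}. q ^ dinv N e P)" for e K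
  define G where "G J a \<tau> = t ^ (\<Sum>i=1..m-1. a i) * q ^ (dstat m (\<lambda>j. a (j - 1)) \<tau> + hstat (m-1) J a)
        * Ncoef m (alphaJ J a) (betaT a \<tau>) \<mu> q" for J and a \<tau> :: "nat \<Rightarrow> nat"
  define H where "H a \<tau> = t ^ (\<Sum>i=1..m-1. a i) * (\<Sum>J\<in>ATloc.Js m a \<tau> l.
        q ^ (dstat m (\<lambda>j. a (j - 1)) \<tau> + hstat (m-1) J a) *
        (\<Sum>S\<in>ATloc.SSet m a \<tau> J \<mu>. q ^ hw0 m (alphaJ J a) (betaT a \<tau>) S))" for a \<tau>
  have "coeff (lhs_poly N l \<mu> q t) (N - m) = (\<Sum>e\<in>dyck N. \<Sum>K\<in>Ks N m e. f e K)"
    unfolding lhs_expand f_def Ks_def ..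
  also have "\<dots> = (\<Sum>(e,K)\<in>Sigma (dyck N) (Ks N m). f e K)"
    by (rule sum.Sigma) (use finite_dyck finite_Ks in auto)
  also have "\<dots> = (\<Sum>(a,\<tau>)\<in>ATs N m. f (ATloc.ee N m a \<tau>) (ATloc.Kset N m \<tau>))"
    by (rule reindex_outer[OF m1 mN])
  also have "\<dots> = (\<Sum>(a,\<tau>)\<in>ATs N m. H a \<tau>)"
  proof (rule sum.cong[OF refl], clarify)
    fix a \<tau> assume "(a,\<tau>) \<in> ATs N m"
    then interpret A: ATloc N m a \<tau> unfolding ATs_def by simp
    show "f A.ee A.Kset = H a \<tau>"
      unfolding f_def H_def A.t_weight[OF assms(3)] A.LW_def[symmetric] A.inner_sum ..
  qed
  also have "\<dots> = (\<Sum>x\<in>ATs N m. \<Sum>J\<in>ATloc.Js m (fst x) (snd x) l. G J (fst x) (snd x))"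
  proof (rule sum.cong[OF refl])
    fix x assume x: "x \<in> ATs N m"
    obtain a \<tau> where x': "x = (a,\<tau>)" by (cases x)
    interpret A: ATloc N m a \<tau> using x x' unfolding ATs_def by simp
    have nc: "Ncoef m (alphaJ J a) (betaT a \<tau>) \<mu> q = (\<Sum>S\<in>A.SSet J \<mu>. q ^ hw0 m (alphaJ J a) (betaT a \<tau>) S)"
      if J: "J \<in> A.Js l" for J
    proof -
      have "\<not> (\<exists>j\<in>{1..m}. alphaJ J a j > betaT a \<tau> j)" using J unfolding A.Js_def by auto
      then show ?thesis unfolding Ncoef_def A.SSet_def by simp
    qed
    have "H a \<tau> = (\<Sum>J\<in>A.Js l. G J a \<tau>)"
      unfolding H_def G_def using nc by (simp add: sum_distrib_left mult.assoc)
    then show "(case x of (a, \<tau>) \<Rightarrow> H a \<tau>) = (\<Sum>J\<in>ATloc.Js m (fst x) (snd x) l. G J (fst x) (snd x))"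
      using x' by simp
  qed
  also have "\<dots> = (\<Sum>(x,J)\<in>(SIGMA x:ATs N m. ATloc.Js m (fst x) (snd x) l). G J (fst x) (snd x))"
  proof (rule sum.Sigma)
    show "finite (ATs N m)" using finite_ATs[OF m1 mN] .
    show "\<forall>x\<in>ATs N m. finite (ATloc.Js m (fst x) (snd x) l)"
    proof
      fix x assume "x \<in> ATs N m"
      then have "ATloc N m (fst x) (snd x)" unfolding ATs_def by auto
      then show "finite (ATloc.Js m (fst x) (snd x) l)" by (rule ATloc.finite_Js)
    qed
  qed
  also have "\<dots> = (\<Sum>(J,a,\<tau>)\<in>rhs_index N m l. G J a \<tau>)"
    by (rule sum.reindex_bij_witness[where i = "\<lambda>(J,a,\<tau>). ((a,\<tau>),J)" and j = "\<lambda>((a,\<tau>),J). (J,a,\<tau>)"])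
       (auto simp: rhs_index_iff[OF m1 mN])
  finally show ?thesis unfolding G_def .
qed


end
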